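(* Let $\mathcal{A}$ be a finite list of elements of $\Gamma=\mathbb{Z}^\ell$ and let $k$ be a positive divisor of $\rho_{\mathcal{A}}$. Then the $k$-constituent of the characteristic quasi-polynomial of $\mathcal{A}$, i.e. the polynomial $f_k(t)$ such that $f_k(q)=\#\mathcal{M}(\mathcal{A};\mathbb{Z}^\ell,\mathbb{Z}/q\mathbb{Z})$ for every positive integer $q\equiv k\pmod{\rho_{\mathcal{A}}}$, satisfies $$f_k(t)=\chi^{\mathbb{Z}/k\mathbb{Z}}_{\mathcal{A}}(t).$$
   Context: $\mathcal{M}(\mathcal{A};\mathbb{Z}^\ell,G)=\mathrm{Hom}(\mathbb{Z}^\ell,G)\smallsetminus\bigcup_{\alpha\in\mathcal{A}}\{\varphi\mid\varphi(\alpha)=0\}\cong\{x\in G^\ell\mid \alpha(x)\ne0\ \forall\alpha\in\mathcal{A}\}$. For a sublist $\mathcal{S}$ (sublists distinguished by index), write $(\mathbb{Z}^\ell/\langle\mathcal{S}\rangle)_{\mathrm{tor}}\simeq\bigoplus_i\mathbb{Z}/d_{\mathcal{S},i}\mathbb{Z}$ with $d_{\mathcal{S},i}\mid d_{\mathcal{S},i+1}$; $\rho_{\mathcal{A}}$ is the lcm of the largest such $d_{\mathcal{S},i}$ over all $\mathcal{S}\subset\mathcal{A}$. It is known (Kamiya–Takemura–Terao) that $q\mapsto\#\mathcal{M}(\mathcal{A};\mathbb{Z}^\ell,\mathbb{Z}/q\mathbb{Z})$ is a quasi-polynomial with period $\rho_{\mathcal{A}}$, so the polynomials $f_k$ exist.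 $r_{\mathcal{S}}$ is the rank of $\langle\mathcal{S}\rangle$, $m(\mathcal{S};G)=\#\mathrm{Hom}((\mathbb{Z}^\ell/\langle\mathcal{S}\rangle)_{\mathrm{tor}},G)$ and $\chi^G_{\mathcal{A}}(t)=\sum_{\mathcal{S}\subset\mathcal{A}}(-1)^{\#\mathcal{S}}m(\mathcal{S};G)t^{\ell-r_{\mathcal{S}}}$. *)

theory Defs
  imports "HOL-Algebra.Elementary_Groups" "HOL-Algebra.Generated_Groups" "HOL-Algebra.Coset"
begin

text \<open>The lattice Gamma = Z^l, elements represented as integer lists of length l,
  as an (additive, written multiplicatively) HOL-Algebra group.\<close>
definition Zl :: "nat \<Rightarrow> int list monoid" where
  "Zl l = \<lparr>carrier = {x. length x = l}, mult = (\<lambda>x y. map2 (+) x y),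
           one = replicate l 0\<rparr>"

text \<open>The subgroup generated by the sublist S of A given by the index set I.\<close>
definition lat_span :: "nat \<Rightarrow> int list list \<Rightarrow> nat set \<Rightarrow> int list set" where
  "lat_span l A I = generate (Zl l) ((\<lambda>i. A ! i) ` I)"

text \<open>Preimage in Z^l of the torsion part of Z^l / <S>.\<close>
definition tor_part :: "nat \<Rightarrow> int list list \<Rightarrow> nat set \<Rightarrow> int list set" where
  "tor_part l A I = {x \<in> carrier (Zl l). \<exists>n::nat. n > 0 \<and> x [^]\<^bsub>Zl l\<^esub> n \<in> lat_span l A I}"

definition tor_group :: "nat \<Rightarrow> int list list \<Rightarrow> nat set \<Rightarrow> int list set monoid" where
  "tor_group l A I = ((Zl l)\<lparr>carrier := tor_part l A I\<rparr>) Mod (lat_span l A I)"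

text \<open>Exponent of a finite group = largest invariant factor d_{S,max} (1 for the trivial group).\<close>
definition grp_exponent :: "('a, 'b) monoid_scheme \<Rightarrow> nat" where
  "grp_exponent G = (LEAST n. n > 0 \<and> (\<forall>x \<in> carrier G. x [^]\<^bsub>G\<^esub> n = \<one>\<^bsub>G\<^esub>))"

definition rho :: "nat \<Rightarrow> int list list \<Rightarrow> nat" where
  "rho l A = Lcm {grp_exponent (tor_group l A I) | I. I \<subseteq> {..<length A}}"

definition m_hom :: "nat \<Rightarrow> int list list \<Rightarrow> nat set \<Rightarrow> nat \<Rightarrow> nat" where
  "m_hom l A I k = card (hom (tor_group l A I) (integer_mod_group k)
                         \<inter> extensional (carrier (tor_group l A I)))"

definition lin_indep_Z :: "nat \<Rightarrow> int list set \<Rightarrow> bool" where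
  "lin_indep_Z l X \<longleftrightarrow> finite X \<and>
     (\<forall>c :: int list \<Rightarrow> int. (\<forall>i<l. (\<Sum>x\<in>X. c x * x ! i) = 0) \<longrightarrow> (\<forall>x\<in>X. c x = 0))"

definition rank_S :: "nat \<Rightarrow> int list list \<Rightarrow> nat set \<Rightarrow> nat" where
  "rank_S l A I = Max {card X | X. X \<subseteq> lat_span l A I \<and> lin_indep_Z l X}"

definition chi :: "nat \<Rightarrow> int list list \<Rightarrow> nat \<Rightarrow> int \<Rightarrow> int" where
  "chi l A k t = (\<Sum>I \<in> Pow {..<length A}.
       (-1) ^ card I * int (m_hom l A I k) * t ^ (l - rank_S l A I))"

text \<open>#M(A; Z^l, Z/qZ), identifying Hom(Z^l, Z/qZ) with (Z/qZ)^l.\<close>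
definition M_card :: "nat \<Rightarrow> int list list \<Rightarrow> nat \<Rightarrow> nat" where
  "M_card l A q = card {x :: int list. length x = l \<and> set x \<subseteq> {0..<int q} \<and>
       (\<forall>a \<in> set A. (\<Sum>i<l. a ! i * x ! i) mod int q \<noteq> 0)}"

end

theory Submission
  imports Defs
begin

definition vadd :: "int list \<Rightarrow> int list \<Rightarrow> int list" where
  "vadd x y = map2 (+) x y"
definition vneg :: "int list \<Rightarrow> int list" where "vneg x = map uminus x"
definition smul :: "int \<Rightarrow> int list \<Rightarrow> int list" where "smul c x = map ((*) c) x"
definition zv :: "nat \<Rightarrow> int list" where "zv l = replicate l 0"
definition ev :: "nat \<Rightarrow> nat \<Rightarrow> int list" where
  "ev l i = map (\<lambda>j. if j = i then 1 else 0) [0..<l]"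

lemma len_vadd[simp]: "length (vadd x y) = min (length x) (length y)"
  by (simp add: vadd_def)
lemma nth_vadd[simp]: "i < length x \<Longrightarrow> i < length y \<Longrightarrow> vadd x y ! i = x!i + y!i"
  by (simp add: vadd_def)
lemma len_vneg[simp]: "length (vneg x) = length x" by (simp add: vneg_def)
lemma nth_vneg[simp]: "i < length x \<Longrightarrow> vneg x ! i = - x!i" by (simp add: vneg_def)
lemma len_smul[simp]: "length (smul c x) = length x" by (simp add: smul_def)
lemma nth_smul[simp]: "i < length x \<Longrightarrow> smul c x ! i = c * x!i" by (simp add: smul_def)
lemma len_zv[simp]: "length (zv l) = l" by (simp add: zv_def)
lemma nth_zv[simp]: "i < l \<Longrightarrow> zv l ! i = 0" by (simp add: zv_def)
lemma len_ev[simp]: "length (ev l i) = l" by (simp add: ev_def)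
lemma nth_ev[simp]: "j < l \<Longrightarrow> ev l i ! j = (if j = i then 1 else 0)" by (simp add: ev_def)

definition lin :: "nat \<Rightarrow> (int list \<Rightarrow> int list) \<Rightarrow> bool" where
  "lin l f \<longleftrightarrow> (\<forall>x. length x = l \<longrightarrow> length (f x) = l) \<and>
     (\<forall>x y. length x = l \<longrightarrow> length y = l \<longrightarrow> f (vadd x y) = vadd (f x) (f y))"

lemma lin_len: "lin l f \<Longrightarrow> length x = l \<Longrightarrow> length (f x) = l"
  by (simp add: lin_def)
lemma lin_add: "lin l f \<Longrightarrow> length x = l \<Longrightarrow> length y = l \<Longrightarrow> f (vadd x y) = vadd (f x) (f y)"
  by (simp add: lin_def)

lemma lin_zero: assumes "lin l f" shows "f (zv l) = zv l"
proof -
  have "zv l = vadd (zv l) (zv l)" by (rule nth_equalityI) auto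
  then have e: "f (zv l) = vadd (f (zv l)) (f (zv l))" using lin_add[OF assms] by (metis len_zv)
  have L: "length (f (zv l)) = l" using lin_len[OF assms] by simp
  show ?thesis
  proof (rule nth_equalityI)
    fix i assume "i < length (f (zv l))"
    then have "i < l" using L by simp
    have "f (zv l) ! i = f (zv l) ! i + f (zv l) ! i"
      using arg_cong[OF e, of "\<lambda>v. v ! i"] \<open>i<l\<close> L by simp
    then show "f (zv l) ! i = zv l ! i" using \<open>i<l\<close> by simp
  qed (simp add: L)
qed

lemma smul_Suc: "smul (int (Suc n)) x = vadd (smul (int n) x) x"
  by (rule nth_equalityI) (auto simp: algebra_simps)

lemma lin_smul_nat: assumes "lin l f" "length x = l" shows "f (smul (int n) x) = smul (int n) (f x)"
proof (induction n)
  case 0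
  have "smul (int 0) x = zv l" using assms(2) by (intro nth_equalityI) auto
  moreover have "smul (int 0) (f x) = zv l" using lin_len[OF assms] by (intro nth_equalityI) auto
  ultimately show ?case using lin_zero[OF assms(1)] by simp
next
  case (Suc n)
  have "f (smul (int (Suc n)) x) = vadd (f (smul (int n) x)) (f x)"
    using smul_Suc lin_add[OF assms(1)] assms(2) by simp
  also have "\<dots> = smul (int (Suc n)) (f x)" using Suc smul_Suc by simp
  finally show ?case .
qed

lemma lin_smul: assumes "lin l f" "length x = l" shows "f (smul c x) = smul c (f x)"
proof (cases "c \<ge> 0")
  case True
  then obtain n where "c = int n" by (metis nonneg_int_cases)
  then show ?thesis using lin_smul_nat[OF assms, of n] by simp
next
  case False
  obtain n where c: "c = - int n" using False by (intro that[of "nat (-c)"]) simp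
  have "vadd (smul c x) (smul (int n) x) = zv l" using assms(2) c by (intro nth_equalityI) auto
  then have "vadd (f (smul c x)) (f (smul (int n) x)) = zv l"
    using lin_add[OF assms(1)] lin_zero[OF assms(1)] assms(2) by (metis len_smul)
  then have "vadd (f (smul c x)) (smul (int n) (f x)) = zv l" using lin_smul_nat[OF assms] by simp
  then show ?thesis
  proof -
    assume h: "vadd (f (smul c x)) (smul (int n) (f x)) = zv l"
    have L1: "length (f (smul c x)) = l" using lin_len[OF assms(1)] assms(2) by simp
    have L2: "length (f x) = l" using lin_len[OF assms(1)] assms(2) by simp
    show ?thesis
    proof (rule nth_equalityI)
      fix i assume "i < length (f (smul c x))"
      then have i: "i < l" using L1 by simp
      have "f (smul c x) ! i + int n * f x ! i = 0" using arg_cong[OF h, of "\<lambda>v. v!i"] i L1 L2 by simp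
      then show "f (smul c x) ! i = smul c (f x) ! i" using i L2 c by simp
    qed (simp add: L1 L2)
  qed
qed

definition pre :: "nat \<Rightarrow> nat \<Rightarrow> int list \<Rightarrow> int list" where
  "pre l n b = map (\<lambda>i. if i < n then b!i else 0) [0..<l]"

lemma len_pre[simp]: "length (pre l n b) = l" by (simp add: pre_def)
lemma pre_0: "pre l 0 b = zv l" by (rule nth_equalityI) (auto simp: pre_def)
lemma pre_l: "length b = l \<Longrightarrow> pre l l b = b" by (rule nth_equalityI) (auto simp: pre_def)
lemma pre_Suc: "n < l \<Longrightarrow> pre l (Suc n) b = vadd (pre l n b) (smul (b!n) (ev l n))"
  by (rule nth_equalityI) (auto simp: pre_def less_Suc_eq)

lemma lin_matrix:
  assumes "lin l f" "length y = l" "i < l"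
  shows "f y ! i = (\<Sum>j<l. y!j * f (ev l j) ! i)"
proof -
  have "n \<le> l \<Longrightarrow> f (pre l n y) ! i = (\<Sum>j<n. y!j * f (ev l j) ! i)" for n
  proof (induction n)
    case 0 then show ?case using lin_zero[OF assms(1)] assms(3) by (simp add: pre_0)
  next
    case (Suc n)
    then have n: "n < l" by simp
    have "f (pre l (Suc n) y) = vadd (f (pre l n y)) (smul (y!n) (f (ev l n)))"
      using pre_Suc[OF n] lin_add[OF assms(1)] lin_smul[OF assms(1)] by simp
    then show ?case using Suc n assms lin_len[OF assms(1)] by simp
  qed
  from this[of l] show ?thesis using pre_l[OF assms(2)] by simp
qed



definition lauto :: "nat \<Rightarrow> (int list \<Rightarrow> int list) \<Rightarrow> (int list \<Rightarrow> int list) \<Rightarrow> bool" where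
  "lauto l f g \<longleftrightarrow> lin l f \<and> lin l g \<and> (\<forall>x. length x = l \<longrightarrow> g (f x) = x \<and> f (g x) = x)"

lemma lauto_sym: "lauto l f g \<Longrightarrow> lauto l g f" by (auto simp: lauto_def)

lemma lin_comp: "lin l f \<Longrightarrow> lin l h \<Longrightarrow> lin l (h \<circ> f)"
  by (simp add: lin_def)

lemma lauto_comp: "lauto l f g \<Longrightarrow> lauto l h h' \<Longrightarrow> lauto l (h \<circ> f) (g \<circ> h')"
  unfolding lauto_def by (auto simp: lin_comp lin_len)

lemma lin_id: "lin l id" by (simp add: lin_def)
lemma lauto_id: "lauto l id id" by (simp add: lauto_def lin_id)

definition sg :: "nat \<Rightarrow> int list set \<Rightarrow> bool" where
  "sg l L \<longleftrightarrow> (\<forall>x\<in>L. length x = l) \<and> zv l \<in> L \<and> (\<forall>x\<in>L. \<forall>y\<in>L. vadd x y \<in> L) \<and> (\<forall>x\<in>L. vneg x \<in> L)"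

lemma sg_len: "sg l L \<Longrightarrow> x \<in> L \<Longrightarrow> length x = l" by (simp add: sg_def)
lemma sg_zero: "sg l L \<Longrightarrow> zv l \<in> L" by (simp add: sg_def)
lemma sg_add: "sg l L \<Longrightarrow> x \<in> L \<Longrightarrow> y \<in> L \<Longrightarrow> vadd x y \<in> L" by (simp add: sg_def)
lemma sg_neg: "sg l L \<Longrightarrow> x \<in> L \<Longrightarrow> vneg x \<in> L" by (simp add: sg_def)

lemma sg_smul_nat: assumes "sg l L" "x \<in> L" shows "smul (int n) x \<in> L"
proof (induction n)
  case 0
  have "smul (int 0) x = zv l" using sg_len[OF assms] by (intro nth_equalityI) auto
  then show ?case using sg_zero[OF assms(1)] by simp
next
  case (Suc n) then show ?case using smul_Suc sg_add[OF assms(1)] assms(2) by simp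
qed

lemma sg_smul: assumes "sg l L" "x \<in> L" shows "smul c x \<in> L"
proof (cases "c \<ge> 0")
  case True
  then obtain n where "c = int n" by (metis nonneg_int_cases)
  then show ?thesis using sg_smul_nat[OF assms, of n] by simp
next
  case False
  obtain n where c: "c = - int n" using False by (intro that[of "nat (-c)"]) simp
  have "smul c x = vneg (smul (int n) x)" using c by (intro nth_equalityI) auto
  then show ?thesis using sg_neg[OF assms(1) sg_smul_nat[OF assms]] by simp
qed

lemma vneg_smul: "vneg x = smul (-1) x" by (intro nth_equalityI) auto

lemma lin_neg: "lin l f \<Longrightarrow> length x = l \<Longrightarrow> f (vneg x) = vneg (f x)"
  using lin_smul by (simp add: vneg_smul)

lemma sg_image: assumes "sg l L" "lin l f" shows "sg l (f ` L)"
  unfolding sg_def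
proof (intro conjI ballI)
  show "zv l \<in> f ` L" using lin_zero[OF assms(2)] sg_zero[OF assms(1)] by (metis image_eqI)
next
  fix x assume "x \<in> f ` L" then show "length x = l" using sg_len[OF assms(1)] lin_len[OF assms(2)] by auto
next
  fix x y assume "x \<in> f ` L" "y \<in> f ` L"
  then obtain a b where "a \<in> L" "b \<in> L" "x = f a" "y = f b" by auto
  then show "vadd x y \<in> f ` L"
    using lin_add[OF assms(2)] sg_len[OF assms(1)] sg_add[OF assms(1)] by (metis image_eqI)
next
  fix x assume "x \<in> f ` L"
  then obtain a where "a \<in> L" "x = f a" by auto
  then show "vneg x \<in> f ` L"
    using lin_neg[OF assms(2)] sg_len[OF assms(1)] sg_neg[OF assms(1)] by (metis image_eqI)
qed

definition Dmod :: "nat \<Rightarrow> nat list \<Rightarrow> int list set" where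
  "Dmod l d = {x. length x = l \<and> (\<forall>i<l. int (d!i) dvd x!i)}"

definition sw :: "nat \<Rightarrow> int list \<Rightarrow> int list" where
  "sw j x = x[0 := x!j, j := x!0]"

lemma len_sw[simp]: "length (sw j x) = length x" by (simp add: sw_def)

lemma nth_sw: "j < length x \<Longrightarrow> i < length x \<Longrightarrow>
   sw j x ! i = (if i = j then x!0 else if i = 0 then x!j else x!i)"
  by (cases x) (auto simp: sw_def nth_list_update nth_Cons split: nat.splits)

lemma nth_sw0: "j < length x \<Longrightarrow> sw j x ! 0 = x!j"
  using nth_sw[of j x 0] by (cases "j = 0") (auto, cases x, auto)
lemma nth_swj: "j < length x \<Longrightarrow> sw j x ! j = x!0"
  using nth_sw[of j x j] by (cases "j = 0") auto

lemma lin_sw: assumes "j < l" shows "lin l (sw j)"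
  unfolding lin_def
proof (intro conjI allI impI)
  fix x y :: "int list" assume "length x = l" "length y = l"
  then show "sw j (vadd x y) = vadd (sw j x) (sw j y)"
    using assms by (intro nth_equalityI) (auto simp: nth_sw)
qed simp

lemma sw_sw: "j < length x \<Longrightarrow> sw j (sw j x) = x"
  by (intro nth_equalityI) (auto simp: nth_sw nth_sw0 nth_swj)

lemma lauto_sw: "j < l \<Longrightarrow> lauto l (sw j) (sw j)"
  by (simp add: lauto_def lin_sw sw_sw)

definition sh :: "int list \<Rightarrow> int list \<Rightarrow> int list" where
  "sh c x = hd x # vadd (tl x) (smul (hd x) c)"

lemma vadd_Cons[simp]: "vadd (a # xs) (b # ys) = (a + b) # vadd xs ys" by (simp add: vadd_def)

lemma len_sh: "length c = l \<Longrightarrow> length x = Suc l \<Longrightarrow> length (sh c x) = Suc l"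
  by (cases x) (auto simp: sh_def)

lemma lin_sh: assumes "length c = l" shows "lin (Suc l) (sh c)"
  unfolding lin_def
proof (intro conjI allI impI)
  fix x :: "int list" assume "length x = Suc l" then show "length (sh c x) = Suc l" using len_sh assms by simp
next
  fix x y :: "int list" assume "length x = Suc l" "length y = Suc l"
  then obtain a xs b ys where x: "x = a # xs" "length xs = l" and y: "y = b # ys" "length ys = l"
    by (metis length_Suc_conv)
  have "vadd (vadd xs ys) (smul (a + b) c) = vadd (vadd xs (smul a c)) (vadd ys (smul b c))"
    using x y assms by (intro nth_equalityI) (auto simp: algebra_simps)
  then show "sh c (vadd x y) = vadd (sh c x) (sh c y)" using x y by (simp add: sh_def)
qed

lemma sh_inv: assumes "length c = l" "length x = Suc l" shows "sh (vneg c) (sh c x) = x"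
proof -
  obtain a xs where x: "x = a # xs" "length xs = l" using assms(2) by (metis length_Suc_conv)
  have "vadd (vadd xs (smul a c)) (smul a (vneg c)) = xs"
    using x assms by (intro nth_equalityI) auto
  then show ?thesis using x by (simp add: sh_def)
qed

lemma lauto_sh: assumes "length c = l" shows "lauto (Suc l) (sh c) (sh (vneg c))"
proof -
  have "vneg (vneg c) = c" by (intro nth_equalityI) auto
  then show ?thesis unfolding lauto_def using lin_sh assms sh_inv[of "vneg c" l] sh_inv[OF assms(1)]
    by (metis len_vneg)
qed

definition lf :: "(int list \<Rightarrow> int list) \<Rightarrow> int list \<Rightarrow> int list" where
  "lf f x = hd x # f (tl x)"

lemma lin_lf: assumes "lin l f" shows "lin (Suc l) (lf f)"
  unfolding lin_def
proof (intro conjI allI impI)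
  fix x :: "int list" assume "length x = Suc l" then show "length (lf f x) = Suc l"
    using lin_len[OF assms] by (cases x) (auto simp: lf_def)
next
  fix x y :: "int list" assume "length x = Suc l" "length y = Suc l"
  then obtain a xs b ys where x: "x = a # xs" "length xs = l" and y: "y = b # ys" "length ys = l"
    by (metis length_Suc_conv)
  then show "lf f (vadd x y) = vadd (lf f x) (lf f y)" using lin_add[OF assms] by (simp add: lf_def)
qed

lemma lauto_lf: assumes "lauto l f g" shows "lauto (Suc l) (lf f) (lf g)"
  using assms unfolding lauto_def
  by (auto simp: lin_lf lf_def lin_len length_Suc_conv)



lemma zv_Suc: "zv (Suc l) = 0 # zv l" by (simp add: zv_def)

lemma hd_sh: "hd (sh c x) = hd x" by (simp add: sh_def)

lemma diag_step:
  assumes L: "sg (Suc l) L"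
  shows "\<exists>F G d0. lauto (Suc l) F G \<and>
           F ` L = {y. length y = Suc l \<and> int d0 dvd hd y \<and> 0 # tl y \<in> F ` L}"
proof (cases "\<forall>v\<in>L. v = zv (Suc l)")
  case True
  have "id ` L = {y. length y = Suc l \<and> int 0 dvd hd y \<and> 0 # tl y \<in> id ` L}"
  proof (intro equalityI subsetI)
    fix y assume "y \<in> id ` L"
    then have y: "y \<in> L" "y = 0 # zv l" using True zv_Suc by auto
    then show "y \<in> {y. length y = Suc l \<and> int 0 dvd hd y \<and> 0 # tl y \<in> id ` L}" by simp
  next
    fix y assume "y \<in> {y. length y = Suc l \<and> int 0 dvd hd y \<and> 0 # tl y \<in> id ` L}"
    then have "length y = Suc l" "hd y = 0" "0 # tl y \<in> L" by auto
    then show "y \<in> id ` L" by (cases y) auto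
  qed
  then show ?thesis using lauto_id by blast
next
  case False
  then obtain v where v: "v \<in> L" "v \<noteq> zv (Suc l)" by auto
  have lv: "length v = Suc l" using sg_len[OF L v(1)] .
  obtain i where i: "i < Suc l" "v!i \<noteq> 0"
  proof -
    have "\<exists>i<Suc l. v!i \<noteq> 0"
    proof (rule ccontr)
      assume "\<not> ?thesis"
      then have "v = zv (Suc l)" using lv by (intro nth_equalityI) auto
      then show False using v by simp
    qed
    then show ?thesis using that by blast
  qed
  define P where "P n \<longleftrightarrow> (\<exists>f g u. lauto (Suc l) f g \<and> u \<in> L \<and> \<bar>f u ! 0\<bar> = int n \<and> n > 0)" for n
  have "P (nat \<bar>v!i\<bar>)"
  proof -
    have "\<bar>sw i v ! 0\<bar> = int (nat \<bar>v!i\<bar>)" using nth_sw0[of i v] lv i by simp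
    moreover have "nat \<bar>v!i\<bar> > 0" using i by simp
    ultimately show ?thesis unfolding P_def using lauto_sw[OF i(1)] v(1) by blast
  qed
  define d0 where "d0 = (LEAST n. P n)"
  have Pd0: "P d0" unfolding d0_def by (rule LeastI) fact
  then obtain f g u where fg: "lauto (Suc l) f g" and u: "u \<in> L" and fu: "\<bar>f u ! 0\<bar> = int d0"
    and d0pos: "d0 > 0" unfolding P_def by blast
  have minimal: "int d0 \<le> \<bar>f1 u1 ! 0\<bar>" if "lauto (Suc l) f1 g1" "u1 \<in> L" "f1 u1 ! 0 \<noteq> 0" for f1 g1 u1
  proof -
    have "P (nat \<bar>f1 u1 ! 0\<bar>)" unfolding P_def using that by auto
    then have "d0 \<le> nat \<bar>f1 u1 ! 0\<bar>" unfolding d0_def by (rule Least_le)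
    then show ?thesis by simp
  qed
  define M where "M = f ` L"
  have linf: "lin (Suc l) f" using fg by (simp add: lauto_def)
  have M: "sg (Suc l) M" unfolding M_def by (rule sg_image[OF L linf])
  define w where "w = f u"
  define w0 where "w0 = w ! 0"
  have wM: "w \<in> M" unfolding w_def M_def using u by simp
  have lw: "length w = Suc l" using sg_len[OF M wM] .
  have aw0: "\<bar>w0\<bar> = int d0" unfolding w0_def w_def using fu .
  have w0nz: "w0 \<noteq> 0" using aw0 d0pos by auto
  have minM: "int d0 \<le> \<bar>h y ! 0\<bar>" if hh: "lauto (Suc l) h h'" "y \<in> M" "h y ! 0 \<noteq> 0" for h h' y
  proof -
    obtain u1 where "u1 \<in> L" "y = f u1" using hh(2) unfolding M_def by auto
    then show ?thesis using minimal[OF lauto_comp[OF fg hh(1)], of u1] hh(3) by simp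
  qed
  have dvdM: "w0 dvd y ! 0" if y: "y \<in> M" for y
  proof (rule ccontr)
    assume nd: "\<not> w0 dvd y ! 0"
    define y' where "y' = vadd y (smul (-(y!0 div w0)) w)"
    have "y' \<in> M" unfolding y'_def using sg_add[OF M y sg_smul[OF M wM]] .
    moreover have "y' ! 0 = y!0 mod w0"
      unfolding y'_def using sg_len[OF M y] lw by (simp add: w0_def minus_div_mult_eq_mod[symmetric] algebra_simps)
    moreover have "y!0 mod w0 \<noteq> 0" using nd by (simp add: dvd_eq_mod_eq_0)
    ultimately have "int d0 \<le> \<bar>y!0 mod w0\<bar>" using minM[OF lauto_id, of y'] by simp
    moreover have "\<bar>y!0 mod w0\<bar> < \<bar>w0\<bar>" using w0nz by (rule abs_mod_less)
    ultimately show False using aw0 by simp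
  qed
  define c where "c = map (\<lambda>t. -(t div w0)) (tl w)"
  have lc: "length c = l" unfolding c_def using lw by simp
  define E where "E = sh c"
  have Eauto: "lauto (Suc l) E (sh (vneg c))" unfolding E_def by (rule lauto_sh[OF lc])
  have wsplit: "w = w0 # tl w" unfolding w0_def using lw by (cases w) auto
  have Ew: "E w = w0 # map (\<lambda>t. t mod w0) (tl w)"
  proof -
    have "vadd (tl w) (smul w0 c) = map (\<lambda>t. t mod w0) (tl w)"
      unfolding c_def using lw by (intro nth_equalityI) (auto simp: minus_div_mult_eq_mod[symmetric] algebra_simps)
    then show ?thesis unfolding E_def sh_def using wsplit by (metis list.sel(1))
  qed
  have tlmod: "tl w ! j mod w0 = 0" if j: "j < l" for j
  proof (rule ccontr)
    assume nz: "tl w ! j mod w0 \<noteq> 0"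
    have lE: "length (E w) = Suc l" using Ew lw by simp
    have "(sw (Suc j) \<circ> E) w ! 0 = E w ! Suc j" using nth_sw0[of "Suc j" "E w"] lE j by simp
    also have "\<dots> = tl w ! j mod w0" using Ew j lw by simp
    finally have e: "(sw (Suc j) \<circ> E) w ! 0 = tl w ! j mod w0" .
    have "lauto (Suc l) (sw (Suc j) \<circ> E) (sh (vneg c) \<circ> sw (Suc j))"
      using lauto_comp[OF Eauto lauto_sw[of "Suc j" "Suc l"]] j by simp
    from minM[OF this wM] e nz have "int d0 \<le> \<bar>tl w ! j mod w0\<bar>" by simp
    moreover have "\<bar>tl w ! j mod w0\<bar> < \<bar>w0\<bar>" using w0nz by (rule abs_mod_less)
    ultimately show False using aw0 by simp
  qed
  have Ew2: "E w = w0 # zv l"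
  proof -
    have "map (\<lambda>t. t mod w0) (tl w) = zv l" using tlmod lw by (intro nth_equalityI) auto
    then show ?thesis using Ew by simp
  qed
  define M2 where "M2 = E ` M"
  have linE: "lin (Suc l) E" using Eauto by (simp add: lauto_def)
  have M2: "sg (Suc l) M2" unfolding M2_def by (rule sg_image[OF M linE])
  have ewM2: "w0 # zv l \<in> M2" unfolding M2_def using wM Ew2 by (metis image_eqI)
  have d0dvd: "int d0 dvd a \<longleftrightarrow> w0 dvd a" for a using aw0 by (metis abs_dvd_iff)
  have eq: "M2 = {y. length y = Suc l \<and> int d0 dvd hd y \<and> 0 # tl y \<in> M2}"
  proof (intro equalityI subsetI)
    fix y assume yM2: "y \<in> M2"
    then obtain y1 where y1: "y1 \<in> M" "y = E y1" unfolding M2_def by auto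
    have ly: "length y = Suc l" using sg_len[OF M2 yM2] .
    have ly1: "length y1 = Suc l" using sg_len[OF M y1(1)] .
    have "hd y = y1 ! 0" using y1 hd_sh ly1 unfolding E_def by (cases y1) auto
    then have dv: "w0 dvd hd y" using dvdM[OF y1(1)] by simp
    have ysplit: "y = hd y # tl y" using ly by (cases y) auto
    have "vadd y (smul (-(hd y div w0)) (w0 # zv l)) = 0 # tl y"
    proof -
      have "vadd (tl y) (smul (-(hd y div w0)) (zv l)) = tl y" using ly by (intro nth_equalityI) auto
      moreover have "hd y + (-(hd y div w0)) * w0 = 0" using dv by auto
      ultimately show ?thesis by (subst ysplit) (simp add: smul_def)
    qed
    moreover have "vadd y (smul (-(hd y div w0)) (w0 # zv l)) \<in> M2"
      using sg_add[OF M2 yM2 sg_smul[OF M2 ewM2]] .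
    ultimately show "y \<in> {y. length y = Suc l \<and> int d0 dvd hd y \<and> 0 # tl y \<in> M2}"
      using ly dv d0dvd by simp
  next
    fix y assume "y \<in> {y. length y = Suc l \<and> int d0 dvd hd y \<and> 0 # tl y \<in> M2}"
    then have ly: "length y = Suc l" and dv: "w0 dvd hd y" and t: "0 # tl y \<in> M2" using d0dvd by auto
    have ysplit: "y = hd y # tl y" using ly by (cases y) auto
    have "vadd (0 # tl y) (smul (hd y div w0) (w0 # zv l)) = y"
    proof -
      have "vadd (tl y) (smul (hd y div w0) (zv l)) = tl y" using ly by (intro nth_equalityI) auto
      moreover have "(hd y div w0) * w0 = hd y" using dv by auto
      ultimately show ?thesis by (subst (3) ysplit) (simp add: smul_def)
    qed
    moreover have "vadd (0 # tl y) (smul (hd y div w0) (w0 # zv l)) \<in> M2"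
      using sg_add[OF M2 t sg_smul[OF M2 ewM2]] .
    ultimately show "y \<in> M2" by simp
  qed
  have A: "(E \<circ> f) ` L = M2" unfolding M2_def M_def by (simp add: image_comp)
  have B: "lauto (Suc l) (E \<circ> f) (g \<circ> sh (vneg c))" using lauto_comp[OF fg Eauto] .
  have "lauto (Suc l) (E \<circ> f) (g \<circ> sh (vneg c)) \<and>
      (E \<circ> f) ` L = {y. length y = Suc l \<and> int d0 dvd hd y \<and> 0 # tl y \<in> (E \<circ> f) ` L}"
    unfolding A using B eq by (rule conjI)
  then show ?thesis by blast
qed

lemma diag:
  assumes "sg l L"
  shows "\<exists>f g d. lauto l f g \<and> length d = l \<and> f ` L = Dmod l d"
  using assms
proof (induction l arbitrary: L)
  case 0
  have "L = {[]}" using sg_len[OF 0] sg_zero[OF 0] by (auto simp: zv_def)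
  moreover have "Dmod 0 [] = {[]}" by (auto simp: Dmod_def)
  ultimately show ?case using lauto_id[of 0]
    by (intro exI[of _ id] exI[of _ "[]::nat list"]) (simp add: id_def)
next
  case (Suc l)
  obtain F G d0 where FG: "lauto (Suc l) F G"
    and eq: "F ` L = {y. length y = Suc l \<and> int d0 dvd hd y \<and> 0 # tl y \<in> F ` L}"
    using diag_step[OF Suc.prems] by blast
  define M where "M = F ` L"
  have M: "sg (Suc l) M" unfolding M_def using sg_image[OF Suc.prems] FG by (simp add: lauto_def)
  define L' where "L' = {xs. 0 # xs \<in> M}"
  have L': "sg l L'" unfolding sg_def L'_def
  proof (intro conjI ballI)
    fix x assume "x \<in> {xs. 0 # xs \<in> M}" then show "length x = l" using sg_len[OF M] by fastforce
  next
    show "zv l \<in> {xs. 0 # xs \<in> M}" using sg_zero[OF M] zv_Suc by simp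
  next
    fix x y assume "x \<in> {xs. 0 # xs \<in> M}" "y \<in> {xs. 0 # xs \<in> M}"
    then show "vadd x y \<in> {xs. 0 # xs \<in> M}" using sg_add[OF M] by fastforce
  next
    fix x assume "x \<in> {xs. 0 # xs \<in> M}"
    then show "vneg x \<in> {xs. 0 # xs \<in> M}" using sg_neg[OF M] by (fastforce simp: vneg_def)
  qed
  obtain f' g' d' where fg': "lauto l f' g'" and ld': "length d' = l" and e': "f' ` L' = Dmod l d'"
    using Suc.IH[OF L'] by blast
  have H: "lauto (Suc l) (lf f' \<circ> F) (G \<circ> lf g')" using lauto_comp[OF FG lauto_lf[OF fg']] .
  have "(lf f' \<circ> F) ` L = Dmod (Suc l) (d0 # d')"
  proof (intro equalityI subsetI)
    fix z assume "z \<in> (lf f' \<circ> F) ` L"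
    then obtain y where y: "y \<in> M" "z = lf f' y" unfolding M_def by auto
    then have yy: "length y = Suc l" "int d0 dvd hd y" "0 # tl y \<in> M" using eq unfolding M_def by auto
    then have "tl y \<in> L'" unfolding L'_def by simp
    then have "f' (tl y) \<in> Dmod l d'" using e' by auto
    then show "z \<in> Dmod (Suc l) (d0 # d')" using yy y(2)
      by (auto simp: Dmod_def lf_def less_Suc_eq_0_disj)
  next
    fix z assume z: "z \<in> Dmod (Suc l) (d0 # d')"
    then obtain a zs where zz: "z = a # zs" "length zs = l" unfolding Dmod_def by (auto simp: length_Suc_conv)
    have "int d0 dvd a" using z zz by (auto simp: Dmod_def)
    have "zs \<in> Dmod l d'" using z zz by (auto simp: Dmod_def)
    then obtain xs where xs: "xs \<in> L'" "zs = f' xs" using e' by auto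
    have lxs: "length xs = l" using sg_len[OF L' xs(1)] .
    have "a # xs \<in> M" using eq xs(1) lxs \<open>int d0 dvd a\<close> unfolding M_def L'_def
      by auto
    moreover have "lf f' (a # xs) = z" using zz xs by (simp add: lf_def)
    ultimately show "z \<in> (lf f' \<circ> F) ` L" unfolding M_def by (metis image_comp image_eqI)
  qed
  then show ?case using H ld' by (metis length_Cons)
qed



definition dot :: "nat \<Rightarrow> int list \<Rightarrow> int list \<Rightarrow> int" where
  "dot l a x = (\<Sum>i<l. a!i * x!i)"

definition CC :: "nat \<Rightarrow> nat \<Rightarrow> int list set \<Rightarrow> int list set" where
  "CC l q L = {x. length x = l \<and> set x \<subseteq> {0..<int q} \<and> (\<forall>a\<in>L. dot l a x mod int q = 0)}"

definition hmap :: "nat \<Rightarrow> nat \<Rightarrow> (int list \<Rightarrow> int list) \<Rightarrow> int list \<Rightarrow> int list" where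
  "hmap l q f x = map (\<lambda>j. dot l (f (ev l j)) x mod int q) [0..<l]"

lemma len_hmap[simp]: "length (hmap l q f x) = l" by (simp add: hmap_def)

lemma dot_ev: "j < l \<Longrightarrow> dot l (ev l j) x = x ! j"
proof -
  assume j: "j < l"
  have "dot l (ev l j) x = (\<Sum>i<l. if i = j then x!i else 0)"
    unfolding dot_def by (rule sum.cong) auto
  also have "\<dots> = x!j" using j by simp
  finally show ?thesis .
qed

lemma key_h:
  assumes f: "lin l f" and b: "length b = l" and x: "length x = l"
  shows "dot l b (hmap l q f x) mod int q = dot l (f b) x mod int q"
proof -
  have "dot l b (hmap l q f x) mod int q = (\<Sum>j<l. b!j * (dot l (f (ev l j)) x mod int q)) mod int q"
    unfolding dot_def hmap_def by simp
  also have "\<dots> = (\<Sum>j<l. (b!j * (dot l (f (ev l j)) x mod int q)) mod int q) mod int q"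
    by (simp add: mod_sum_eq)
  also have "\<dots> = (\<Sum>j<l. (b!j * dot l (f (ev l j)) x) mod int q) mod int q"
    by (simp add: mod_mult_right_eq)
  also have "\<dots> = (\<Sum>j<l. b!j * dot l (f (ev l j)) x) mod int q"
    by (simp add: mod_sum_eq)
  also have "(\<Sum>j<l. b!j * dot l (f (ev l j)) x) = (\<Sum>j<l. \<Sum>i<l. b!j * f (ev l j) ! i * x!i)"
    unfolding dot_def by (simp add: sum_distrib_left mult.assoc)
  also have "\<dots> = (\<Sum>i<l. \<Sum>j<l. b!j * f (ev l j) ! i * x!i)" by (rule sum.swap)
  also have "\<dots> = (\<Sum>i<l. f b ! i * x!i)"
    by (rule sum.cong) (auto simp: lin_matrix[OF f b] sum_distrib_right)
  finally show ?thesis unfolding dot_def .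
qed

lemma hmap_inv:
  assumes fg: "lauto l f g" and x: "length x = l" "set x \<subseteq> {0..<int q}"
  shows "hmap l q g (hmap l q f x) = x"
proof (rule nth_equalityI)
  fix j assume "j < length (hmap l q g (hmap l q f x))"
  then have j: "j < l" by simp
  have lg: "lin l g" and lf: "lin l f" using fg by (auto simp: lauto_def)
  have "hmap l q g (hmap l q f x) ! j = dot l (g (ev l j)) (hmap l q f x) mod int q"
    using j by (simp add: hmap_def)
  also have "\<dots> = dot l (f (g (ev l j))) x mod int q" using key_h[OF lf _ x(1)] lin_len[OF lg] by simp
  also have "\<dots> = x!j mod int q" using fg j by (simp add: lauto_def dot_ev)
  also have "\<dots> = x!j" using x j by (auto simp: subset_iff)
  finally show "hmap l q g (hmap l q f x) ! j = x!j" .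
qed (simp add: x)

lemma hmap_range: "q > 0 \<Longrightarrow> set (hmap l q f x) \<subseteq> {0..<int q}"
  by (auto simp: hmap_def)

lemma hmap_CC:
  assumes fg: "lauto l f g" and L: "\<forall>b\<in>L. length b = l" and q: "q > 0"
    and x: "x \<in> CC l q (f ` L)"
  shows "hmap l q f x \<in> CC l q L"
proof -
  have lf: "lin l f" using fg by (simp add: lauto_def)
  have "dot l b (hmap l q f x) mod int q = 0" if b: "b \<in> L" for b
    using key_h[OF lf L[rule_format, OF b], of x q] x b by (auto simp: CC_def)
  then show ?thesis using hmap_range[OF q] by (auto simp: CC_def)
qed

lemma card_CC_inv:
  assumes fg: "lauto l f g" and L: "\<forall>b\<in>L. length b = l" and q: "q > 0"
  shows "card (CC l q (f ` L)) = card (CC l q L)"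
proof -
  have gf: "lauto l g f" using lauto_sym[OF fg] .
  have gfL: "g ` f ` L = L" using fg L by (force simp: lauto_def image_iff)
  have fL: "\<forall>b\<in>f ` L. length b = l" using fg L by (auto simp: lauto_def lin_len)
  have "bij_betw (hmap l q f) (CC l q (f ` L)) (CC l q L)"
  proof (rule bij_betw_byWitness[where f' = "hmap l q g"])
    show "\<forall>x\<in>CC l q (f ` L). hmap l q g (hmap l q f x) = x"
      using hmap_inv[OF fg] by (auto simp: CC_def)
    show "\<forall>x\<in>CC l q L. hmap l q f (hmap l q g x) = x"
      using hmap_inv[OF gf] by (auto simp: CC_def)
    show "hmap l q f ` CC l q (f ` L) \<subseteq> CC l q L" using hmap_CC[OF fg L q] by auto
    show "hmap l q g ` CC l q L \<subseteq> CC l q (f ` L)" using hmap_CC[OF gf fL q] gfL by auto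
  qed
  then show ?thesis by (rule bij_betw_same_card)
qed

lemma card_lists_pw:
  assumes "\<And>i. finite (P i)"
  shows "card {x. length x = n \<and> (\<forall>i<n. x!i \<in> P i)} = (\<Prod>i<n. card (P i))"
  using assms
proof (induction n arbitrary: P)
  case 0
  have "{x. length x = 0 \<and> (\<forall>i<0. x!i \<in> P i)} = {[]}" by auto
  then show ?case by simp
next
  case (Suc n)
  have eq: "{x. length x = Suc n \<and> (\<forall>i<Suc n. x!i \<in> P i)} =
        (\<lambda>(a, xs). a # xs) ` (P 0 \<times> {x. length x = n \<and> (\<forall>i<n. x!i \<in> P (Suc i))})"
  proof (intro equalityI subsetI)
    fix x assume "x \<in> {x. length x = Suc n \<and> (\<forall>i<Suc n. x!i \<in> P i)}"
    then obtain a xs where "x = a # xs" "length xs = n" "\<forall>i<Suc n. x!i \<in> P i"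
      by (auto simp: length_Suc_conv)
    then show "x \<in> (\<lambda>(a, xs). a # xs) ` (P 0 \<times> {x. length x = n \<and> (\<forall>i<n. x!i \<in> P (Suc i))})"
      by (force simp: image_iff)
  next
    fix x assume "x \<in> (\<lambda>(a, xs). a # xs) ` (P 0 \<times> {x. length x = n \<and> (\<forall>i<n. x!i \<in> P (Suc i))})"
    then show "x \<in> {x. length x = Suc n \<and> (\<forall>i<Suc n. x!i \<in> P i)}"
      by (auto simp: less_Suc_eq_0_disj)
  qed
  have inj: "inj_on (\<lambda>(a, xs). a # xs) X" for X :: "('a \<times> 'a list) set" by (auto simp: inj_on_def)
  have "card {x. length x = Suc n \<and> (\<forall>i<Suc n. x!i \<in> P i)} =
      card (P 0) * card {x. length x = n \<and> (\<forall>i<n. x!i \<in> P (Suc i))}"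
    unfolding eq by (simp add: card_image[OF inj] card_cartesian_product)
  also have "\<dots> = card (P 0) * (\<Prod>i<n. card (P (Suc i)))" using Suc.IH[of "\<lambda>i. P (Suc i)"] Suc.prems by simp
  also have "\<dots> = (\<Prod>i<Suc n. card (P i))" by (simp only: prod.lessThan_Suc_shift)
  finally show ?case .
qed

lemma card_gcd_set:
  assumes q: "q > 0"
  shows "card {a::int. 0 \<le> a \<and> a < int q \<and> (int d * a) mod int q = 0} = gcd d q"
proof -
  define D where "D = int d"
  define Q where "Q = int q"
  define G where "G = gcd D Q"
  have Q0: "Q > 0" using q by (simp add: Q_def)
  have G0: "G > 0" using Q0 by (simp add: G_def)
  define Q' where "Q' = Q div G"
  define D' where "D' = D div G"
  have QQ: "Q = G * Q'" unfolding Q'_def G_def by simp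
  have DD: "D = G * D'" unfolding D'_def G_def by simp
  have cop: "coprime Q' D'" unfolding Q'_def D'_def G_def using Q0 div_gcd_coprime[of Q D]
    by (simp add: coprime_commute gcd.commute)
  have Q'0: "Q' > 0" using QQ Q0 G0 by (simp add: zero_less_mult_iff)
  have iff: "(D * a) mod Q = 0 \<longleftrightarrow> Q' dvd a" for a
  proof -
    have "(D * a) mod Q = 0 \<longleftrightarrow> G * Q' dvd G * (D' * a)" using QQ DD by (simp add: dvd_eq_mod_eq_0 mult.assoc)
    also have "\<dots> \<longleftrightarrow> Q' dvd D' * a" using G0 by simp
    also have "\<dots> \<longleftrightarrow> Q' dvd a" using cop by (simp add: coprime_dvd_mult_right_iff)
    finally show ?thesis .
  qed
  have "{a::int. 0 \<le> a \<and> a < int q \<and> (int d * a) mod int q = 0} = (\<lambda>t. Q' * t) ` {0..<G}"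
  proof (intro equalityI subsetI)
    fix a assume "a \<in> {a::int. 0 \<le> a \<and> a < int q \<and> (int d * a) mod int q = 0}"
    then have a: "0 \<le> a" "a < Q" "Q' dvd a" using iff unfolding D_def Q_def by auto
    then obtain t where t: "a = Q' * t" by blast
    have "0 \<le> t" using a(1) t Q'0 by (simp add: zero_le_mult_iff)
    moreover have "t < G" using a(2) t QQ Q'0 by (metis mult.commute mult_less_cancel_right_pos)
    ultimately show "a \<in> (\<lambda>t. Q' * t) ` {0..<G}" using t by auto
  next
    fix a assume "a \<in> (\<lambda>t. Q' * t) ` {0..<G}"
    then obtain t where t: "a = Q' * t" "0 \<le> t" "t < G" unfolding image_iff by (auto intro: that)
    have "a < Q" using t QQ Q'0 by (metis mult.commute mult_less_cancel_right_pos)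
    moreover have "0 \<le> a" using t Q'0 by simp
    moreover have "Q' dvd a" using t by simp
    ultimately show "a \<in> {a::int. 0 \<le> a \<and> a < int q \<and> (int d * a) mod int q = 0}"
      using iff unfolding D_def Q_def by auto
  qed
  moreover have "inj_on (\<lambda>t. Q' * t) {0..<G}" using Q'0 by (auto simp: inj_on_def)
  ultimately have "card {a::int. 0 \<le> a \<and> a < int q \<and> (int d * a) mod int q = 0} = nat G"
    by (simp add: card_image)
  then show ?thesis unfolding G_def D_def Q_def by simp
qed

lemma CC_Dmod:
  assumes ld: "length d = l"
  shows "CC l q (Dmod l d) = {x. length x = l \<and> (\<forall>i<l. x!i \<in> {a. 0 \<le> a \<and> a < int q \<and> (int (d!i) * a) mod int q = 0})}"
proof (intro equalityI subsetI)
  fix x assume x: "x \<in> CC l q (Dmod l d)"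
  have "x!i \<in> {a. 0 \<le> a \<and> a < int q \<and> (int (d!i) * a) mod int q = 0}" if i: "i < l" for i
  proof -
    have "smul (int (d!i)) (ev l i) \<in> Dmod l d" using i by (auto simp: Dmod_def)
    then have "dot l (smul (int (d!i)) (ev l i)) x mod int q = 0" using x by (auto simp: CC_def)
    moreover have "dot l (smul (int (d!i)) (ev l i)) x = int (d!i) * x!i"
    proof -
      have "dot l (smul (int (d!i)) (ev l i)) x = (\<Sum>j<l. if j = i then int (d!i) * x!j else 0)"
        unfolding dot_def by (rule sum.cong) auto
      then show ?thesis using i by simp
    qed
    moreover have "x!i \<in> set x" using x i by (auto simp: CC_def)
    ultimately show ?thesis using x by (auto simp: CC_def)
  qed
  then show "x \<in> {x. length x = l \<and> (\<forall>i<l. x!i \<in> {a. 0 \<le> a \<and> a < int q \<and> (int (d!i) * a) mod int q = 0})}"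
    using x by (auto simp: CC_def)
next
  fix x assume x: "x \<in> {x. length x = l \<and> (\<forall>i<l. x!i \<in> {a. 0 \<le> a \<and> a < int q \<and> (int (d!i) * a) mod int q = 0})}"
  have "set x \<subseteq> {0..<int q}" using x by (auto simp: in_set_conv_nth)
  moreover have "dot l a x mod int q = 0" if a: "a \<in> Dmod l d" for a
  proof -
    have "(a!i * x!i) mod int q = 0" if i: "i < l" for i
    proof -
      obtain t where t: "a!i = int (d!i) * t" using a i by (auto simp: Dmod_def)
      have "(a!i * x!i) mod int q = (t * ((int (d!i) * x!i) mod int q)) mod int q"
        by (simp add: t mod_mult_right_eq algebra_simps)
      then show ?thesis using x i by simp
    qed
    then have "(\<Sum>i<l. (a!i * x!i) mod int q) mod int q = 0" by simp
    then show ?thesis unfolding dot_def by (simp add: mod_sum_eq)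
  qed
  ultimately show "x \<in> CC l q (Dmod l d)" using x by (auto simp: CC_def)
qed

lemma card_CC_Dmod:
  assumes ld: "length d = l" and q: "q > 0"
  shows "card (CC l q (Dmod l d)) = (\<Prod>i<l. gcd (d!i) q)"
proof -
  have "card (CC l q (Dmod l d)) = (\<Prod>i<l. card {a. 0 \<le> a \<and> a < int q \<and> (int (d!i) * a) mod int q = 0})"
    unfolding CC_Dmod[OF ld] by (rule card_lists_pw) (rule finite_subset[of _ "{0..<int q}"], auto)
  also have "\<dots> = (\<Prod>i<l. gcd (d!i) q)" using card_gcd_set[OF q] by simp
  finally show ?thesis .
qed



definition indepF :: "nat \<Rightarrow> 'k set \<Rightarrow> ('k \<Rightarrow> int list) \<Rightarrow> bool" where
  "indepF l K u \<longleftrightarrow> (\<forall>c. (\<forall>i<l. (\<Sum>\<kappa>\<in>K. c \<kappa> * u \<kappa> ! i) = 0) \<longrightarrow> (\<forall>\<kappa>\<in>K. c \<kappa> = 0))"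

lemma elim_bound:
  assumes "finite J"
  shows "finite K \<Longrightarrow> (\<forall>\<kappa>\<in>K. length (u \<kappa>) = l \<and> (\<forall>i<l. i \<notin> J \<longrightarrow> u \<kappa> ! i = 0))
         \<Longrightarrow> indepF l K u \<Longrightarrow> card K \<le> card J"
  using assms
proof (induction J arbitrary: K u rule: finite_induct)
  case empty
  show ?case
  proof (rule ccontr)
    assume "\<not> card K \<le> card {}"
    then have "K \<noteq> {}" by auto
    then obtain \<kappa> where k: "\<kappa> \<in> K" by blast
    have "\<forall>i<l. (\<Sum>\<kappa>\<in>K. (\<lambda>_. 1::int) \<kappa> * u \<kappa> ! i) = 0"
      using empty.prems(2) by (intro allI impI sum.neutral) auto
    then have "(\<lambda>_. 1::int) \<kappa> = 0" using empty.prems(3)[unfolded indepF_def, rule_format, of "\<lambda>_. 1"] k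
      by blast
    then show False by simp
  qed
next
  case (insert j J)
  show ?case
  proof (cases "\<forall>\<kappa>\<in>K. u \<kappa> ! j = 0")
    case True
    have "\<forall>\<kappa>\<in>K. length (u \<kappa>) = l \<and> (\<forall>i<l. i \<notin> J \<longrightarrow> u \<kappa> ! i = 0)"
      using insert.prems(2) True by (metis insert_iff)
    then have "card K \<le> card J" using insert.IH[OF insert.prems(1) _ insert.prems(3)] by simp
    then show ?thesis using insert.hyps by simp
  next
    case False
    then obtain k0 where k0: "k0 \<in> K" "u k0 ! j \<noteq> 0" by blast
    define v where "v = u k0"
    define K' where "K' = K - {k0}"
    define u' where "u' \<kappa> = vadd (smul (v!j) (u \<kappa>)) (smul (-(u \<kappa> ! j)) v)" for \<kappa>
    have lv: "length v = l" using insert.prems(2) k0 unfolding v_def by blast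
    have lu: "length (u \<kappa>) = l" if "\<kappa> \<in> K" for \<kappa> using insert.prems(2) that by blast
    have u'i: "u' \<kappa> ! i = v!j * u \<kappa> ! i - u \<kappa> ! j * v!i" if "\<kappa> \<in> K" "i < l" for \<kappa> i
      using that lu lv by (simp add: u'_def)
    have sup: "\<forall>\<kappa>\<in>K'. length (u' \<kappa>) = l \<and> (\<forall>i<l. i \<notin> J \<longrightarrow> u' \<kappa> ! i = 0)"
    proof (intro ballI conjI allI impI)
      fix \<kappa> assume k: "\<kappa> \<in> K'"
      then have kK: "\<kappa> \<in> K" by (simp add: K'_def)
      show "length (u' \<kappa>) = l" using lu[OF kK] lv by (simp add: u'_def)
      fix i assume i: "i < l" "i \<notin> J"
      show "u' \<kappa> ! i = 0"
      proof (cases "i = j")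
        case True then show ?thesis using u'i[OF kK i(1)] by simp
      next
        case False
        then have "u \<kappa> ! i = 0" "v ! i = 0" using insert.prems(2) kK k0(1) i unfolding v_def by auto
        then show ?thesis using u'i[OF kK i(1)] by simp
      qed
    qed
    have ind: "indepF l K' u'"
      unfolding indepF_def
    proof (intro allI impI ballI)
      fix c' :: "'a \<Rightarrow> int" and \<kappa>
      assume rel: "\<forall>i<l. (\<Sum>\<kappa>\<in>K'. c' \<kappa> * u' \<kappa> ! i) = 0" and k: "\<kappa> \<in> K'"
      define c where "c \<kappa> = (if \<kappa> = k0 then -(\<Sum>\<kappa>'\<in>K'. c' \<kappa>' * u \<kappa>' ! j) else c' \<kappa> * v!j)" for \<kappa>
      have "(\<Sum>\<kappa>\<in>K. c \<kappa> * u \<kappa> ! i) = 0" if i: "i < l" for i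
      proof -
        have e1: "(\<Sum>\<kappa>\<in>K. c \<kappa> * u \<kappa> ! i) = c k0 * u k0 ! i + (\<Sum>\<kappa>\<in>K'. c \<kappa> * u \<kappa> ! i)"
          unfolding K'_def using k0(1) insert.prems(1) by (simp add: sum.remove)
        have e2: "(\<Sum>\<kappa>\<in>K'. c \<kappa> * u \<kappa> ! i) = (\<Sum>\<kappa>\<in>K'. c' \<kappa> * v!j * u \<kappa> ! i)"
          by (rule sum.cong) (auto simp: c_def K'_def)
        have e3: "c k0 * u k0 ! i = - (\<Sum>\<kappa>'\<in>K'. c' \<kappa>' * u \<kappa>' ! j * v!i)"
          by (simp add: c_def v_def sum_distrib_right)
        have e4: "(\<Sum>\<kappa>\<in>K'. c' \<kappa> * u' \<kappa> ! i) =
            (\<Sum>\<kappa>\<in>K'. c' \<kappa> * v!j * u \<kappa> ! i - c' \<kappa> * u \<kappa> ! j * v!i)"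
          by (rule sum.cong) (auto simp: u'i[OF _ i] K'_def algebra_simps)
        have e5: "(\<Sum>\<kappa>\<in>K'. c' \<kappa> * v!j * u \<kappa> ! i - c' \<kappa> * u \<kappa> ! j * v!i) =
            (\<Sum>\<kappa>\<in>K'. c' \<kappa> * v!j * u \<kappa> ! i) - (\<Sum>\<kappa>\<in>K'. c' \<kappa> * u \<kappa> ! j * v!i)"
          by (rule sum_subtractf)
        have "(\<Sum>\<kappa>\<in>K'. c' \<kappa> * u' \<kappa> ! i) = 0" using rel i by simp
        then show ?thesis using e1 e2 e3 e4 e5 by linarith
      qed
      then have "\<forall>\<kappa>\<in>K. c \<kappa> = 0" using insert.prems(3)[unfolded indepF_def, rule_format, of c] by blast
      then have "c' \<kappa> * v!j = 0" using k by (auto simp: c_def K'_def)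
      then show "c' \<kappa> = 0" using k0(2) by (simp add: v_def)
    qed
    have fK': "finite K'" using insert.prems(1) by (simp add: K'_def)
    note foo2 = insert.IH[OF fK' sup]
    have "card K' \<le> card J" using foo2[OF ind] .
    moreover have "card K = Suc (card K')"
      using card.remove[OF insert.prems(1) k0(1)] unfolding K'_def .
    ultimately show ?thesis using insert.hyps by simp
  qed
qed

lemma indep_bound:
  assumes "lin_indep_Z l X" "finite J" "\<forall>x\<in>X. length x = l \<and> (\<forall>i<l. i \<notin> J \<longrightarrow> x ! i = 0)"
  shows "card X \<le> card J"
proof -
  have "indepF l X id" using assms(1) unfolding indepF_def lin_indep_Z_def by simp
  then show ?thesis using elim_bound[OF assms(2), of X id l] assms by (simp add: lin_indep_Z_def)
qed

definition lc :: "nat \<Rightarrow> (int list \<Rightarrow> int) \<Rightarrow> int list set \<Rightarrow> int list" where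
  "lc l c X = map (\<lambda>i. \<Sum>x\<in>X. c x * x!i) [0..<l]"

lemma len_lc[simp]: "length (lc l c X) = l" by (simp add: lc_def)

lemma lin_lc:
  assumes f: "lin l f" and X: "\<forall>x\<in>X. length x = l" and i: "i < l"
  shows "f (lc l c X) ! i = (\<Sum>x\<in>X. c x * f x ! i)"
proof -
  have "f (lc l c X) ! i = (\<Sum>j<l. (\<Sum>x\<in>X. c x * x!j) * f (ev l j) ! i)"
    using lin_matrix[OF f _ i, of "lc l c X"] by (simp add: lc_def)
  also have "\<dots> = (\<Sum>x\<in>X. \<Sum>j<l. c x * x!j * f (ev l j) ! i)"
    by (simp add: sum_distrib_right sum.swap[of _ X])
  also have "\<dots> = (\<Sum>x\<in>X. c x * f x ! i)"
    by (rule sum.cong) (auto simp: lin_matrix[OF f _ i] X sum_distrib_left mult.assoc)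
  finally show ?thesis .
qed

lemma indep_transfer:
  assumes fg: "lauto l f g" and X: "\<forall>x\<in>X. length x = l" and ind: "lin_indep_Z l X"
  shows "lin_indep_Z l (f ` X) \<and> card (f ` X) = card X"
proof -
  have lf: "lin l f" and lg: "lin l g" and gf: "\<And>x. length x = l \<Longrightarrow> g (f x) = x"
    using fg by (auto simp: lauto_def)
  have inj: "inj_on f X" using gf X by (metis inj_on_inverseI)
  have fin: "finite X" using ind by (simp add: lin_indep_Z_def)
  have "\<forall>y\<in>f ` X. c y = 0" if rel: "\<forall>i<l. (\<Sum>y\<in>f ` X. c y * y ! i) = 0" for c
  proof -
    have r2: "\<forall>i<l. (\<Sum>x\<in>X. c (f x) * f x ! i) = 0" using rel by (simp add: sum.reindex[OF inj])
    have "f (lc l (c \<circ> f) X) = zv l"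
      using lin_lc[OF lf X] r2 lin_len[OF lf, of "lc l (c \<circ> f) X"]
      by (intro nth_equalityI) (auto simp: lc_def)
    then have "g (f (lc l (c \<circ> f) X)) = g (zv l)" by simp
    then have lz: "lc l (c \<circ> f) X = zv l"
      using gf[of "lc l (c \<circ> f) X"] lin_zero[OF lg] by (simp only: len_lc)
    have "\<forall>i<l. (\<Sum>x\<in>X. (c \<circ> f) x * x ! i) = 0"
    proof (intro allI impI)
      fix i assume "i < l"
      then show "(\<Sum>x\<in>X. (c \<circ> f) x * x ! i) = 0"
        using arg_cong[OF lz, of "\<lambda>v. v ! i"] by (simp add: lc_def)
    qed
    then have "\<forall>x\<in>X. (c \<circ> f) x = 0" using ind unfolding lin_indep_Z_def by blast
    then show ?thesis by auto
  qed
  then show ?thesis using fin card_image[OF inj] by (simp add: lin_indep_Z_def)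
qed

definition rk :: "nat \<Rightarrow> int list set \<Rightarrow> nat" where
  "rk l L = Max {card X | X. X \<subseteq> L \<and> lin_indep_Z l X}"

lemma rank_Dmod:
  assumes fg: "lauto l f g" and L: "sg l L" and ld: "length d = l" and e: "f ` L = Dmod l d"
  shows "rk l L = card {i. i < l \<and> d!i \<noteq> 0}"
proof -
  define J where "J = {i. i < l \<and> d!i \<noteq> 0}"
  have finJ: "finite J" by (simp add: J_def)
  have gf: "lauto l g f" using lauto_sym[OF fg] .
  have gfx: "g (f x) = x" if "length x = l" for x using fg that by (simp add: lauto_def)
  have ub: "card X \<le> card J" if X: "X \<subseteq> L" "lin_indep_Z l X" for X
  proof -
    have XL: "\<forall>x\<in>X. length x = l" using X(1) sg_len[OF L] by blast
    from indep_transfer[OF fg XL X(2)] have t: "lin_indep_Z l (f ` X)" "card (f ` X) = card X" by auto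
    have "\<forall>x\<in>f ` X. length x = l \<and> (\<forall>i<l. i \<notin> J \<longrightarrow> x ! i = 0)"
    proof
      fix y assume "y \<in> f ` X"
      then have "y \<in> Dmod l d" using e X(1) by blast
      then show "length y = l \<and> (\<forall>i<l. i \<notin> J \<longrightarrow> y ! i = 0)" by (auto simp: Dmod_def J_def)
    qed
    from indep_bound[OF t(1) finJ this] t(2) show ?thesis by simp
  qed
  define B where "B = (\<lambda>i. smul (int (d!i)) (ev l i)) ` J"
  have injB: "inj_on (\<lambda>i. smul (int (d!i)) (ev l i)) J"
  proof (rule inj_onI)
    fix i j assume ij: "i \<in> J" "j \<in> J" "smul (int (d!i)) (ev l i) = smul (int (d!j)) (ev l j)"
    then have "smul (int (d!i)) (ev l i) ! i = smul (int (d!j)) (ev l j) ! i" by simp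
    then show "i = j" using ij(1,2) by (auto simp: J_def split: if_splits)
  qed
  have BD: "B \<subseteq> Dmod l d" unfolding B_def J_def Dmod_def by auto
  have Blen: "\<forall>x\<in>B. length x = l" using BD by (auto simp: Dmod_def)
  have indB: "lin_indep_Z l B"
    unfolding lin_indep_Z_def
  proof (intro conjI allI impI ballI)
    show "finite B" using finJ by (simp add: B_def)
    fix c assume rel: "\<forall>i<l. (\<Sum>x\<in>B. c x * x ! i) = 0"
    fix b assume "b \<in> B"
    then obtain i where i: "i \<in> J" "b = smul (int (d!i)) (ev l i)" by (auto simp: B_def)
    have il: "i < l" using i by (simp add: J_def)
    have "(\<Sum>x\<in>B. c x * x ! i) = (\<Sum>j\<in>J. c (smul (int (d!j)) (ev l j)) * smul (int (d!j)) (ev l j) ! i)"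
      unfolding B_def by (simp add: sum.reindex[OF injB])
    also have "\<dots> = (\<Sum>j\<in>J. if j = i then c b * int (d!i) else 0)"
      by (rule sum.cong) (auto simp: il i(2))
    also have "\<dots> = c b * int (d!i)" using i(1) finJ by simp
    finally have "c b * int (d!i) = 0" using rel il by simp
    then show "c b = 0" using i(1) by (simp add: J_def)
  qed
  have cardB: "card B = card J" unfolding B_def using card_image[OF injB] .
  from indep_transfer[OF gf Blen indB] have t: "lin_indep_Z l (g ` B)" "card (g ` B) = card J"
    using cardB by auto
  have gB: "g ` B \<subseteq> L"
  proof
    fix y assume "y \<in> g ` B"
    then obtain b where "b \<in> B" "y = g b" by auto
    then obtain x where "x \<in> L" "b = f x" using BD e by blast
    then show "y \<in> L" using \<open>y = g b\<close> gfx sg_len[OF L] by simp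
  qed
  have S: "{card X | X. X \<subseteq> L \<and> lin_indep_Z l X} \<subseteq> {..card J}"
  proof (rule subsetI)
    fix n assume "n \<in> {card X | X. X \<subseteq> L \<and> lin_indep_Z l X}"
    then obtain X where "n = card X" "X \<subseteq> L" "lin_indep_Z l X" by blast
    then show "n \<in> {..card J}" using ub by simp
  qed
  have mem: "card J \<in> {card X | X. X \<subseteq> L \<and> lin_indep_Z l X}"
    using t(1) gB by (intro CollectI exI[of _ "g ` B"]) (simp add: t(2))
  have fin: "finite {card X | X. X \<subseteq> L \<and> lin_indep_Z l X}"
    using S by (rule finite_subset) simp
  have "Max {card X | X. X \<subseteq> L \<and> lin_indep_Z l X} = card J"
  proof (rule Max_eqI[OF fin])
    fix n assume "n \<in> {card X | X. X \<subseteq> L \<and> lin_indep_Z l X}"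
    then show "n \<le> card J" using S by auto
  qed (rule mem)
  then show ?thesis unfolding rk_def J_def .
qed



lemma carrier_Zl[simp]: "carrier (Zl l) = {x. length x = l}" by (simp add: Zl_def)
lemma mult_Zl[simp]: "x \<otimes>\<^bsub>Zl l\<^esub> y = vadd x y" by (simp add: Zl_def vadd_def)
lemma one_Zl[simp]: "\<one>\<^bsub>Zl l\<^esub> = zv l" by (simp add: Zl_def zv_def)

lemma comm_group_Zl: "comm_group (Zl l)"
proof (rule comm_groupI)
  fix x y z :: "int list"
  assume x: "x \<in> carrier (Zl l)" and y: "y \<in> carrier (Zl l)" and z: "z \<in> carrier (Zl l)"
  show "x \<otimes>\<^bsub>Zl l\<^esub> y \<in> carrier (Zl l)" using x y by simp
  show "x \<otimes>\<^bsub>Zl l\<^esub> y \<otimes>\<^bsub>Zl l\<^esub> z = x \<otimes>\<^bsub>Zl l\<^esub> (y \<otimes>\<^bsub>Zl l\<^esub> z)"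
    using x y z by (simp, intro nth_equalityI) auto
next
  fix x y :: "int list"
  assume x: "x \<in> carrier (Zl l)" and y: "y \<in> carrier (Zl l)"
  show "x \<otimes>\<^bsub>Zl l\<^esub> y = y \<otimes>\<^bsub>Zl l\<^esub> x" using x y by (simp, intro nth_equalityI) auto
next
  show "\<one>\<^bsub>Zl l\<^esub> \<in> carrier (Zl l)" by simp
next
  fix x :: "int list" assume x: "x \<in> carrier (Zl l)"
  show "\<one>\<^bsub>Zl l\<^esub> \<otimes>\<^bsub>Zl l\<^esub> x = x" using x by (simp, intro nth_equalityI) auto
  show "\<exists>y\<in>carrier (Zl l). y \<otimes>\<^bsub>Zl l\<^esub> x = \<one>\<^bsub>Zl l\<^esub>"
    using x by (intro bexI[of _ "vneg x"]) (simp, intro nth_equalityI, auto)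
qed

lemma group_Zl: "group (Zl l)" using comm_group_Zl comm_group_def by blast

lemma inv_Zl: "length x = l \<Longrightarrow> inv\<^bsub>Zl l\<^esub> x = vneg x"
  by (rule group.inv_equality[OF group_Zl]) (simp, intro nth_equalityI, auto)

lemma pow_Zl: "length x = l \<Longrightarrow> x [^]\<^bsub>Zl l\<^esub> (n::nat) = smul (int n) x"
proof (induction n)
  case 0 then show ?case by simp (intro nth_equalityI, auto)
next
  case (Suc n) then show ?case using smul_Suc[of n x, symmetric] by simp
qed

lemma subgroup_sg: "subgroup H (Zl l) \<Longrightarrow> sg l H"
  unfolding sg_def
  using subgroup.subset[of H "Zl l"] subgroup.one_closed[of H "Zl l"]
    subgroup.m_closed[of H "Zl l"] subgroup.m_inv_closed[of H "Zl l"] inv_Zl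
  by fastforce

lemma sg_subgroup: "sg l H \<Longrightarrow> subgroup H (Zl l)"
  by (rule group.subgroupI[OF group_Zl]) (auto simp: sg_def inv_Zl)

lemma sg_lat_span:
  assumes "\<forall>a \<in> set A. length a = l" "I \<subseteq> {..<length A}"
  shows "sg l (lat_span l A I)"
proof -
  have "(\<lambda>i. A ! i) ` I \<subseteq> carrier (Zl l)" using assms by auto
  then have "subgroup (lat_span l A I) (Zl l)"
    unfolding lat_span_def by (rule group.generate_is_subgroup[OF group_Zl])
  then show ?thesis by (rule subgroup_sg)
qed

lemma lat_span_dot:
  assumes "\<forall>a \<in> set A. length a = l" "I \<subseteq> {..<length A}"
  shows "(\<forall>i\<in>I. dot l (A!i) x mod int q = 0) \<longleftrightarrow> (\<forall>a\<in>lat_span l A I. dot l a x mod int q = 0)"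
proof
  assume h: "\<forall>i\<in>I. dot l (A!i) x mod int q = 0"
  show "\<forall>a\<in>lat_span l A I. dot l a x mod int q = 0"
  proof
    fix a assume "a \<in> lat_span l A I"
    then have "a \<in> generate (Zl l) ((\<lambda>i. A ! i) ` I)" by (simp add: lat_span_def)
    then show "dot l a x mod int q = 0"
    proof (induction rule: generate.induct)
      case one then show ?case by (simp add: dot_def)
    next
      case (incl h) then show ?case using h by auto
    next
      case (inv h)
      then obtain i where i: "i \<in> I" "h = A!i" by auto
      have lh: "length h = l" using i assms by auto
      have "dot l (vneg h) x = - dot l h x" unfolding dot_def using lh by (simp add: sum_negf)
      then show ?case using inv_Zl[OF lh] h i by (simp add: zmod_zminus1_eq_if)
    next
      case (eng h1 h2)
      have s: "(\<lambda>i. A ! i) ` I \<subseteq> carrier (Zl l)" using assms by auto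
      have "h1 \<in> carrier (Zl l)" "h2 \<in> carrier (Zl l)"
        using group.generate_in_carrier[OF group_Zl s] eng.hyps by auto
      then have "dot l (vadd h1 h2) x = dot l h1 x + dot l h2 x"
        unfolding dot_def by (simp add: sum.distrib algebra_simps)
      then show ?case using eng.IH by (simp add: mod_add_eq[symmetric])
    qed
  qed
next
  assume "\<forall>a\<in>lat_span l A I. dot l a x mod int q = 0"
  moreover have "A!i \<in> lat_span l A I" if "i \<in> I" for i
    unfolding lat_span_def using that by (intro generate.incl) simp
  ultimately show "\<forall>i\<in>I. dot l (A!i) x mod int q = 0" by blast
qed



lemma hom_one_gen: "h \<in> hom G K \<Longrightarrow> group G \<Longrightarrow> group K \<Longrightarrow> h \<one>\<^bsub>G\<^esub> = \<one>\<^bsub>K\<^esub>"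
  by (simp add: group_hom.hom_one group_hom_axioms.intro group_hom_def)

lemma quot_hom_card:
  fixes G (structure)
  assumes N: "N \<lhd> G" and K: "group K"
  shows "card (hom (G Mod N) K \<inter> extensional (carrier (G Mod N))) =
         card {h \<in> hom G K \<inter> extensional (carrier G). \<forall>x\<in>N. h x = \<one>\<^bsub>K\<^esub>}"
proof -
  interpret normal N G by (rule N)
  have GM: "group (G Mod N)" by (rule factorgroup_is_group)
  define \<beta> where "\<beta> H = restrict (\<lambda>x. H (N #> x)) (carrier G)" for H :: "'a set \<Rightarrow> 'c"
  define Hs where "Hs = hom (G Mod N) K \<inter> extensional (carrier (G Mod N))"
  define Hg where "Hg = {h \<in> hom G K \<inter> extensional (carrier G). \<forall>x\<in>N. h x = \<one>\<^bsub>K\<^esub>}"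
  have cosc: "N #> x \<in> carrier (G Mod N)" if "x \<in> carrier G" for x
    using that by (simp add: carrier_FactGroup)
  have inj: "inj_on \<beta> Hs"
  proof (rule inj_onI)
    fix H1 H2 assume H: "H1 \<in> Hs" "H2 \<in> Hs" "\<beta> H1 = \<beta> H2"
    show "H1 = H2"
    proof (rule extensionalityI)
      show "H1 \<in> extensional (carrier (G Mod N))" "H2 \<in> extensional (carrier (G Mod N))"
        using H by (auto simp: Hs_def)
      fix C assume "C \<in> carrier (G Mod N)"
      then obtain x where x: "x \<in> carrier G" "C = N #> x" by (auto simp: carrier_FactGroup)
      have "\<beta> H1 x = \<beta> H2 x" using H(3) by simp
      then show "H1 C = H2 C" using x by (simp add: \<beta>_def)
    qed
  qed
  have img1: "\<beta> ` Hs \<subseteq> Hg"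
  proof
    fix h assume "h \<in> \<beta> ` Hs"
    then obtain H where H: "H \<in> Hs" "h = \<beta> H" by auto
    have Hh: "H \<in> hom (G Mod N) K" using H by (simp add: Hs_def)
    have "h \<in> hom G K"
    proof (rule homI)
      fix x assume "x \<in> carrier G"
      then show "h x \<in> carrier K" using H(2) hom_in_carrier[OF Hh cosc] by (simp add: \<beta>_def)
    next
      fix x y assume xy: "x \<in> carrier G" "y \<in> carrier G"
      have "h (x \<otimes> y) = H (N #> (x \<otimes> y))" using H(2) xy by (simp add: \<beta>_def)
      also have "\<dots> = H ((N #> x) <#> (N #> y))" using rcos_sum xy by simp
      also have "\<dots> = H (N #> x) \<otimes>\<^bsub>K\<^esub> H (N #> y)"
        using hom_mult[OF Hh cosc[OF xy(1)] cosc[OF xy(2)]] by simp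
      also have "\<dots> = h x \<otimes>\<^bsub>K\<^esub> h y" using H(2) xy by (simp add: \<beta>_def)
      finally show "h (x \<otimes> y) = h x \<otimes>\<^bsub>K\<^esub> h y" .
    qed
    moreover have "h \<in> extensional (carrier G)" using H(2) by (simp add: \<beta>_def)
    moreover have "\<forall>x\<in>N. h x = \<one>\<^bsub>K\<^esub>"
    proof
      fix x assume x: "x \<in> N"
      then have xc: "x \<in> carrier G" by auto
      have "N #> x = N" using rcos_const[OF is_group x] .
      then have "h x = H \<one>\<^bsub>G Mod N\<^esub>" using H(2) xc by (simp add: \<beta>_def)
      then show "h x = \<one>\<^bsub>K\<^esub>" using hom_one_gen[OF Hh GM K] by simp
    qed
    ultimately show "h \<in> Hg" by (simp add: Hg_def)
  qed
  have img2: "Hg \<subseteq> \<beta> ` Hs"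
  proof
    fix h assume h: "h \<in> Hg"
    have hh: "h \<in> hom G K" and hext: "h \<in> extensional (carrier G)" and hN: "\<forall>x\<in>N. h x = \<one>\<^bsub>K\<^esub>"
      using h by (auto simp: Hg_def)
    have cond: "h x = h y" if xy: "x \<in> carrier G" "y \<in> carrier G" "N #> x = N #> y" for x y
    proof -
      have "x \<in> N #> y" using rcos_self[OF xy(1) subgroup_axioms] xy(3) by simp
      then obtain n where n: "n \<in> N" "x = n \<otimes> y" by (auto simp: r_coset_def)
      have "h x = h n \<otimes>\<^bsub>K\<^esub> h y" using n hom_mult[OF hh] xy by auto
      also have "\<dots> = h y" using hN n(1) hom_in_carrier[OF hh xy(2)] group.is_monoid[OF K]
        by (simp add: monoid.l_one)
      finally show ?thesis .
    qed
    obtain g' where g': "g' \<in> hom (G Mod N) K" "\<And>x. x \<in> carrier G \<Longrightarrow> g' (N #> x) = h x"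
      using FactGroup_universal[OF hh N cond] by blast
    define H where "H = restrict g' (carrier (G Mod N))"
    have "H \<in> hom (G Mod N) K"
    proof (rule homI)
      fix C assume "C \<in> carrier (G Mod N)"
      then show "H C \<in> carrier K" using hom_in_carrier[OF g'(1)] by (simp add: H_def)
    next
      fix C D assume CD: "C \<in> carrier (G Mod N)" "D \<in> carrier (G Mod N)"
      have "C \<otimes>\<^bsub>G Mod N\<^esub> D \<in> carrier (G Mod N)" using monoid.m_closed[OF group.is_monoid[OF GM] CD] .
      then show "H (C \<otimes>\<^bsub>G Mod N\<^esub> D) = H C \<otimes>\<^bsub>K\<^esub> H D"
        using hom_mult[OF g'(1) CD] CD by (simp add: H_def)
    qed
    then have HHs: "H \<in> Hs" by (simp add: Hs_def H_def)
    have "\<beta> H = h"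
    proof (rule extensionalityI[OF _ hext])
      show "\<beta> H \<in> extensional (carrier G)" by (simp add: \<beta>_def)
      fix x assume x: "x \<in> carrier G"
      then show "\<beta> H x = h x" using g'(2)[OF x] cosc[OF x] by (simp add: \<beta>_def H_def)
    qed
    then show "h \<in> \<beta> ` Hs" using HHs by blast
  qed
  have "bij_betw \<beta> Hs Hg" unfolding bij_betw_def using inj img1 img2 by blast
  then show ?thesis unfolding Hs_def Hg_def by (rule bij_betw_same_card)
qed



locale dsetup =
  fixes l :: nat and L :: "int list set" and f g :: "int list \<Rightarrow> int list" and d :: "nat list"
  assumes sgL: "sg l L" and fg: "lauto l f g" and ld: "length d = l" and eL: "f ` L = Dmod l d"
begin

definition S where "S = {x. length x = l \<and> (\<exists>n::nat. n > 0 \<and> smul (int n) x \<in> L)}"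
definition SD where "SD = {y. length y = l \<and> (\<forall>i<l. d!i = 0 \<longrightarrow> y!i = 0)}"
definition n0 where "n0 = (\<Prod>i<l. if d!i = 0 then 1 else d!i)"

lemma lf: "lin l f" using fg by (simp add: lauto_def)
lemma lg: "lin l g" using fg by (simp add: lauto_def)
lemma gf: "length x = l \<Longrightarrow> g (f x) = x" using fg by (simp add: lauto_def)
lemma fgx: "length x = l \<Longrightarrow> f (g x) = x" using fg by (simp add: lauto_def)

lemma inL: assumes "length z = l" shows "z \<in> L \<longleftrightarrow> f z \<in> Dmod l d"
proof
  assume "z \<in> L" then show "f z \<in> Dmod l d" using eL by blast
next
  assume "f z \<in> Dmod l d"
  then obtain w where w: "w \<in> L" "f z = f w" using eL by (metis imageE)
  then have "g (f z) = g (f w)" by simp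
  then show "z \<in> L" using gf[OF assms] gf[OF sg_len[OF sgL w(1)]] w(1) by simp
qed

lemma n0_pos: "n0 > 0" unfolding n0_def by (intro prod_pos) auto

lemma dvd_n0: "i < l \<Longrightarrow> d!i \<noteq> 0 \<Longrightarrow> d!i dvd n0"
  unfolding n0_def using dvd_prodI[of "{..<l}" i "\<lambda>i. if d!i = 0 then 1 else d!i"] by simp

lemma n0_L: assumes "length x = l" "f x \<in> SD" shows "smul (int n0) x \<in> L"
proof -
  have "f (smul (int n0) x) = smul (int n0) (f x)" using lin_smul[OF lf assms(1)] .
  moreover have "smul (int n0) (f x) \<in> Dmod l d"
    unfolding Dmod_def
  proof (intro CollectI conjI allI impI)
    show "length (smul (int n0) (f x)) = l" using lin_len[OF lf assms(1)] by simp
    fix i assume i: "i < l"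
    show "int (d!i) dvd smul (int n0) (f x) ! i"
    proof (cases "d!i = 0")
      case True then show ?thesis using assms(2) i by (simp add: SD_def)
    next
      case False
      then have "int (d!i) dvd int n0" using dvd_n0[OF i] by simp
      then show ?thesis using i lin_len[OF lf assms(1)] by simp
    qed
  qed
  ultimately show ?thesis using inL[of "smul (int n0) x"] assms(1) by simp
qed

lemma S_char: "x \<in> S \<longleftrightarrow> length x = l \<and> f x \<in> SD"
proof
  assume "x \<in> S"
  then obtain n :: nat where x: "length x = l" "n > 0" "smul (int n) x \<in> L" by (auto simp: S_def)
  then have "f (smul (int n) x) \<in> Dmod l d" using inL by simp
  then have "smul (int n) (f x) \<in> Dmod l d" using lin_smul[OF lf x(1)] by simp
  then have "f x \<in> SD" using x(2) lin_len[OF lf x(1)] by (auto simp: Dmod_def SD_def)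
  then show "length x = l \<and> f x \<in> SD" using x(1) by simp
next
  assume "length x = l \<and> f x \<in> SD"
  then show "x \<in> S" using n0_L n0_pos by (auto simp: S_def)
qed

lemma S_len: "x \<in> S \<Longrightarrow> length x = l" by (simp add: S_char)

lemma sg_S: "sg l S"
  unfolding sg_def
proof (intro conjI ballI)
  show "zv l \<in> S" using lin_zero[OF lf] by (simp add: S_char SD_def)
next
  fix x assume "x \<in> S" then show "length x = l" by (rule S_len)
next
  fix x y assume "x \<in> S" "y \<in> S"
  then show "vadd x y \<in> S" using lin_add[OF lf] lin_len[OF lf] by (auto simp: S_char SD_def)
next
  fix x assume "x \<in> S"
  then show "vneg x \<in> S" using lin_neg[OF lf] lin_len[OF lf] by (auto simp: S_char SD_def)
qed

lemma L_S: "L \<subseteq> S"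
proof
  fix x assume x: "x \<in> L"
  have "smul (int 1) x = x" by (intro nth_equalityI) auto
  then show "x \<in> S" using x sg_len[OF sgL x] unfolding S_def by (intro CollectI conjI exI[of _ 1]) auto
qed

lemma gS: "y \<in> SD \<Longrightarrow> g y \<in> S"
  using fgx lin_len[OF lg] by (auto simp: S_char SD_def)

lemma evSD: "i < l \<Longrightarrow> d!i \<noteq> 0 \<Longrightarrow> ev l i \<in> SD"
  by (auto simp: SD_def)

abbreviation "G' \<equiv> (Zl l)\<lparr>carrier := S\<rparr>"

lemma subS: "subgroup S (Zl l)" using sg_subgroup[OF sg_S] .
lemma subL: "subgroup L (Zl l)" using sg_subgroup[OF sgL] .
lemma grpG': "group G'" using group.subgroup_imp_group[OF group_Zl subS] .
lemma carrier_G'[simp]: "carrier G' = S" by simp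
lemma mult_G'[simp]: "x \<otimes>\<^bsub>G'\<^esub> y = vadd x y" by (simp add: Zl_def vadd_def)
lemma one_G'[simp]: "\<one>\<^bsub>G'\<^esub> = zv l" by (simp add: Zl_def zv_def)

lemma commG': "comm_group G'"
proof (rule group.group_comm_groupI[OF grpG'])
  fix x y assume "x \<in> carrier G'" "y \<in> carrier G'"
  then show "x \<otimes>\<^bsub>G'\<^esub> y = y \<otimes>\<^bsub>G'\<^esub> x" using S_len by (simp, intro nth_equalityI, auto)
qed

lemma LG': "subgroup L G'" using group.subgroup_incl[OF group_Zl subL subS L_S] .
lemma normL: "L \<lhd> G'" using comm_group.subgroup_imp_normal[OF commG' LG'] .

lemma invG': "x \<in> S \<Longrightarrow> inv\<^bsub>G'\<^esub> x = vneg x"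
  by (rule group.inv_equality[OF grpG']) (auto simp: sg_neg[OF sg_S] S_len, intro nth_equalityI, auto simp: S_len)

lemma natpowG': assumes "x \<in> S" shows "x [^]\<^bsub>G'\<^esub> (n::nat) = smul (int n) x"
proof -
  have "x [^]\<^bsub>G'\<^esub> n = x [^]\<^bsub>Zl l\<^esub> n"
    using monoid.nat_pow_consistent[OF group.is_monoid[OF group_Zl[of l]], where x=x and n=n and H=S] by simp
  then show ?thesis using pow_Zl[OF S_len[OF assms]] by simp
qed

lemma intpowG': assumes "x \<in> S" shows "x [^]\<^bsub>G'\<^esub> (c::int) = smul c x"
proof (cases "c < 0")
  case True
  have "x [^]\<^bsub>G'\<^esub> c = inv\<^bsub>G'\<^esub> (smul (int (nat (-c))) x)"
    using True natpowG'[OF assms] by (simp add: int_pow_def2)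
  also have "\<dots> = vneg (smul (int (nat (-c))) x)" using invG' sg_smul[OF sg_S assms] by simp
  also have "\<dots> = smul c x" using True by (intro nth_equalityI) auto
  finally show ?thesis .
next
  case False
  have "x [^]\<^bsub>G'\<^esub> c = x [^]\<^bsub>G'\<^esub> (nat c)" using False by (simp only: int_pow_def2 if_False)
  also have "\<dots> = smul (int (nat c)) x" by (rule natpowG'[OF assms])
  finally show ?thesis using False by simp
qed

end



context dsetup
begin

definition Pk where "Pk k i = {a::int. 0 \<le> a \<and> a < int k \<and> (d!i = 0 \<longrightarrow> a = 0) \<and> (int (d!i) * a) mod int k = 0}"
definition Yk where "Yk k = {y. length y = l \<and> (\<forall>i<l. y!i \<in> Pk k i)}"
definition Hg where "Hg k = {h \<in> hom G' (integer_mod_group k) \<inter> extensional S. \<forall>x\<in>L. h x = 0}"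
definition Phi where "Phi h = map (\<lambda>i. if d!i = 0 then 0 else h (g (ev l i))) [0..<l]"
definition Psi where "Psi k y = restrict (\<lambda>x. (\<Sum>i<l. f x ! i * y!i) mod int k) S"

lemma card_Pk: assumes k: "k > 0" shows "card (Pk k i) = (if d!i = 0 then 1 else gcd (d!i) k)"
proof (cases "d!i = 0")
  case True
  then have "Pk k i = {0}" using k by (auto simp: Pk_def)
  then show ?thesis using True by simp
next
  case False
  then have "Pk k i = {a::int. 0 \<le> a \<and> a < int k \<and> (int (d!i) * a) mod int k = 0}" by (auto simp: Pk_def)
  then show ?thesis using False card_gcd_set[OF k] by simp
qed

lemma card_Yk: assumes k: "k > 0" shows "card (Yk k) = (\<Prod>i<l. if d!i = 0 then 1 else gcd (d!i) k)"
proof -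
  have "card (Yk k) = (\<Prod>i<l. card (Pk k i))"
    unfolding Yk_def by (rule card_lists_pw) (rule finite_subset[of _ "{0..<int k}"], auto simp: Pk_def)
  then show ?thesis using card_Pk[OF k] by simp
qed

context
  fixes k :: nat assumes k: "k > 0"
begin

lemma grpK: "group (integer_mod_group k)" by simp

lemma hK: "h \<in> hom G' (integer_mod_group k) \<Longrightarrow> x \<in> S \<Longrightarrow> 0 \<le> h x \<and> h x < int k"
  using hom_in_carrier[of h G' "integer_mod_group k" x] k by (auto simp: carrier_integer_mod_group)

lemma hadd: "h \<in> hom G' (integer_mod_group k) \<Longrightarrow> x \<in> S \<Longrightarrow> y \<in> S \<Longrightarrow> h (vadd x y) = (h x + h y) mod int k"
  using hom_mult[of h G' "integer_mod_group k" x y] by simp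

lemma hzero: "h \<in> hom G' (integer_mod_group k) \<Longrightarrow> h (zv l) = 0"
  using hom_one_gen[of h G' "integer_mod_group k"] grpG' by simp

lemma hsmul: assumes h: "h \<in> hom G' (integer_mod_group k)" and x: "x \<in> S"
  shows "h (smul c x) = (c * h x) mod int k"
proof -
  have "h (x [^]\<^bsub>G'\<^esub> c) = (h x) [^]\<^bsub>integer_mod_group k\<^esub> c"
    using hom_int_pow[OF h _ grpG' grpK] x by simp
  then show ?thesis using intpowG'[OF x] by (simp add: int_pow_integer_mod_group)
qed

lemma pre_SD: "z \<in> SD \<Longrightarrow> pre l n z \<in> SD" by (auto simp: SD_def pre_def)

lemma decomp:
  assumes h: "h \<in> hom G' (integer_mod_group k)" and x: "x \<in> S"
  shows "h x = (\<Sum>i<l. f x ! i * Phi h ! i) mod int k"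
proof -
  define z where "z = f x"
  have zSD: "z \<in> SD" using x by (simp add: S_char z_def)
  have lz: "length z = l" using zSD by (simp add: SD_def)
  have "n \<le> l \<Longrightarrow> h (g (pre l n z)) = (\<Sum>i<n. z ! i * Phi h ! i) mod int k" for n
  proof (induction n)
    case 0 then show ?case using lin_zero[OF lg] hzero[OF h] by (simp add: pre_0)
  next
    case (Suc n)
    then have n: "n < l" by simp
    show ?case
    proof (cases "d!n = 0")
      case True
      then have "z!n = 0" using zSD n by (simp add: SD_def)
      then have "pre l (Suc n) z = pre l n z" by (intro nth_equalityI) (auto simp: pre_def less_Suc_eq)
      then show ?thesis using Suc \<open>z!n = 0\<close> by simp
    next
      case False
      have gpre: "g (pre l n z) \<in> S" using gS[OF pre_SD[OF zSD]] .
      have gev: "g (ev l n) \<in> S" using gS[OF evSD[OF n False]] .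
      have sm: "smul (z!n) (g (ev l n)) \<in> S" using sg_smul[OF sg_S gev] .
      have "g (pre l (Suc n) z) = vadd (g (pre l n z)) (smul (z!n) (g (ev l n)))"
        using pre_Suc[OF n] lin_add[OF lg] lin_smul[OF lg] by simp
      then have "h (g (pre l (Suc n) z)) = (h (g (pre l n z)) + (z!n * h (g (ev l n))) mod int k) mod int k"
        using hadd[OF h gpre sm] hsmul[OF h gev] by simp
      also have "\<dots> = ((\<Sum>i<n. z ! i * Phi h ! i) mod int k + (z!n * Phi h ! n) mod int k) mod int k"
        using Suc n False by (simp add: Phi_def)
      also have "\<dots> = (\<Sum>i<Suc n. z ! i * Phi h ! i) mod int k" by (simp add: mod_add_eq)
      finally show ?thesis .
    qed
  qed
  from this[of l] show ?thesis using pre_l[OF lz] gf[OF S_len[OF x]] by (simp add: z_def)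
qed

lemma Phi_Y: assumes h: "h \<in> Hg k" shows "Phi h \<in> Yk k"
proof -
  have hh: "h \<in> hom G' (integer_mod_group k)" and hL: "\<forall>x\<in>L. h x = 0" using h by (auto simp: Hg_def)
  have "Phi h ! i \<in> Pk k i" if i: "i < l" for i
  proof (cases "d!i = 0")
    case True then show ?thesis using i k by (simp add: Phi_def Pk_def)
  next
    case False
    have gev: "g (ev l i) \<in> S" using gS[OF evSD[OF i False]] .
    have "smul (int (d!i)) (ev l i) \<in> Dmod l d" using i by (auto simp: Dmod_def)
    then have "g (smul (int (d!i)) (ev l i)) \<in> L"
      using inL[of "g (smul (int (d!i)) (ev l i))"] fgx lin_len[OF lg] by simp
    then have "h (smul (int (d!i)) (g (ev l i))) = 0" using hL lin_smul[OF lg] by simp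
    then have "(int (d!i) * h (g (ev l i))) mod int k = 0" using hsmul[OF hh gev] by simp
    then show ?thesis using i False hK[OF hh gev] by (simp add: Phi_def Pk_def)
  qed
  then show ?thesis by (simp add: Yk_def Phi_def)
qed

lemma Psi_H: assumes y: "y \<in> Yk k" shows "Psi k y \<in> Hg k"
proof -
  have ly: "length y = l" and yP: "\<forall>i<l. y!i \<in> Pk k i" using y by (auto simp: Yk_def)
  have "Psi k y \<in> hom G' (integer_mod_group k)"
  proof (rule homI)
    fix x assume "x \<in> carrier G'"
    then show "Psi k y x \<in> carrier (integer_mod_group k)" using k by (simp add: Psi_def carrier_integer_mod_group)
  next
    fix x x' assume xx: "x \<in> carrier G'" "x' \<in> carrier G'"
    then have xs: "x \<in> S" "x' \<in> S" by auto
    have vs: "vadd x x' \<in> S" using sg_add[OF sg_S xs] .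
    have lx: "length x = l" "length x' = l" using xs S_len by auto
    have "(\<Sum>i<l. f (vadd x x') ! i * y!i) = (\<Sum>i<l. f x ! i * y!i) + (\<Sum>i<l. f x' ! i * y!i)"
      using lin_add[OF lf lx] lin_len[OF lf] lx by (simp add: sum.distrib[symmetric] algebra_simps)
    then show "Psi k y (x \<otimes>\<^bsub>G'\<^esub> x') = Psi k y x \<otimes>\<^bsub>integer_mod_group k\<^esub> Psi k y x'"
      using xs vs by (simp add: Psi_def mod_add_eq)
  qed
  moreover have "Psi k y \<in> extensional S" by (simp add: Psi_def)
  moreover have "\<forall>x\<in>L. Psi k y x = 0"
  proof
    fix x assume x: "x \<in> L"
    then have xS: "x \<in> S" using L_S by blast
    have fD: "f x \<in> Dmod l d" using x eL by blast
    have "(f x ! i * y!i) mod int k = 0" if i: "i < l" for i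
    proof -
      obtain t where t: "f x ! i = int (d!i) * t" using fD i by (auto simp: Dmod_def)
      have "(f x ! i * y!i) mod int k = (t * ((int (d!i) * y!i) mod int k)) mod int k"
        by (simp add: t mod_mult_right_eq algebra_simps)
      then show ?thesis using yP i by (simp add: Pk_def)
    qed
    then have "(\<Sum>i<l. (f x ! i * y!i) mod int k) mod int k = 0" by simp
    then show "Psi k y x = 0" using xS by (simp add: Psi_def mod_sum_eq)
  qed
  ultimately show ?thesis by (simp add: Hg_def)
qed

lemma Phi_Psi: assumes y: "y \<in> Yk k" shows "Phi (Psi k y) = y"
proof (rule nth_equalityI)
  have ly: "length y = l" and yP: "\<forall>i<l. y!i \<in> Pk k i" using y by (auto simp: Yk_def)
  show "length (Phi (Psi k y)) = length y" using ly by (simp add: Phi_def)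
  fix i assume "i < length (Phi (Psi k y))"
  then have i: "i < l" by (simp add: Phi_def)
  show "Phi (Psi k y) ! i = y ! i"
  proof (cases "d!i = 0")
    case True then show ?thesis using yP i by (simp add: Phi_def Pk_def)
  next
    case False
    have gev: "g (ev l i) \<in> S" using gS[OF evSD[OF i False]] .
    have "(\<Sum>j<l. f (g (ev l i)) ! j * y!j) = dot l (ev l i) y" using fgx by (simp add: dot_def)
    also have "\<dots> = y!i" using dot_ev[OF i] .
    finally have "Psi k y (g (ev l i)) = y!i mod int k" using gev by (simp add: Psi_def)
    also have "\<dots> = y!i" using yP i by (simp add: Pk_def)
    finally show ?thesis using i False by (simp add: Phi_def)
  qed
qed

lemma Psi_Phi: assumes h: "h \<in> Hg k" shows "Psi k (Phi h) = h"
proof (rule extensionalityI)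
  show "Psi k (Phi h) \<in> extensional S" by (simp add: Psi_def)
  show "h \<in> extensional S" using h by (simp add: Hg_def)
  fix x assume x: "x \<in> S"
  have hh: "h \<in> hom G' (integer_mod_group k)" using h by (simp add: Hg_def)
  show "Psi k (Phi h) x = h x" using decomp[OF hh x] x by (simp add: Psi_def)
qed

lemma card_Hg: "card (Hg k) = card (Yk k)"
proof -
  have "bij_betw Phi (Hg k) (Yk k)"
    by (rule bij_betw_byWitness[where f'="Psi k"]) (auto simp: Phi_Y Psi_H Phi_Psi Psi_Phi)
  then show ?thesis by (rule bij_betw_same_card)
qed

end

lemma card_hom_quot:
  assumes k: "k > 0"
  shows "card (hom (G' Mod L) (integer_mod_group k) \<inter> extensional (carrier (G' Mod L))) =
         (\<Prod>i<l. if d!i = 0 then 1 else gcd (d!i) k)"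
proof -
  have "card (hom (G' Mod L) (integer_mod_group k) \<inter> extensional (carrier (G' Mod L))) = card (Hg k)"
    using quot_hom_card[OF normL group_integer_mod_group[of k]] by (simp add: Hg_def)
  then show ?thesis using card_Hg[OF k] card_Yk[OF k] by simp
qed

end


context dsetup
begin

lemma powT: "x \<in> S \<Longrightarrow> (r_coset G' L x) [^]\<^bsub>G' Mod L\<^esub> (n::nat) = r_coset G' L (smul (int n) x)"
  using normal.FactGroup_pow[OF normL, of x n] natpowG' by simp

lemma expo_ex: "n0 > 0 \<and> (\<forall>C\<in>carrier (G' Mod L). C [^]\<^bsub>G' Mod L\<^esub> n0 = \<one>\<^bsub>G' Mod L\<^esub>)"
proof (intro conjI ballI n0_pos)
  fix C assume "C \<in> carrier (G' Mod L)"
  then obtain x where x: "x \<in> S" "C = r_coset G' L x" by (auto simp: carrier_FactGroup)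
  have "smul (int n0) x \<in> L" using n0_L x(1) by (simp add: S_char)
  then have "r_coset G' L (smul (int n0) x) = L" using subgroup.rcos_const[OF LG' grpG'] by blast
  then show "C [^]\<^bsub>G' Mod L\<^esub> n0 = \<one>\<^bsub>G' Mod L\<^esub>" using powT[OF x(1)] x(2) by simp
qed

lemma dvd_expo:
  assumes i: "i < l" and nz: "d!i \<noteq> 0"
  shows "d!i dvd grp_exponent (G' Mod L)"
proof -
  define E where "E = grp_exponent (G' Mod L)"
  have PE: "E > 0 \<and> (\<forall>C\<in>carrier (G' Mod L). C [^]\<^bsub>G' Mod L\<^esub> E = \<one>\<^bsub>G' Mod L\<^esub>)"
    unfolding E_def grp_exponent_def by (rule LeastI_ex) (use expo_ex in blast)
  define x where "x = g (ev l i)"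
  have xS: "x \<in> S" unfolding x_def using gS[OF evSD[OF i nz]] .
  have "r_coset G' L x \<in> carrier (G' Mod L)" using xS by (simp add: carrier_FactGroup)
  then have "r_coset G' L x [^]\<^bsub>G' Mod L\<^esub> E = L" using PE by simp
  then have e: "r_coset G' L (smul (int E) x) = L" using powT[OF xS] by simp
  have sS: "smul (int E) x \<in> S" using sg_smul[OF sg_S xS] .
  have "smul (int E) x \<in> r_coset G' L (smul (int E) x)"
    using group.rcos_self[OF grpG' _ LG'] sS by simp
  then have "smul (int E) x \<in> L" using e by simp
  then have "f (smul (int E) x) \<in> Dmod l d" using eL by blast
  moreover have "f (smul (int E) x) = smul (int E) (ev l i)"
    using lin_smul[OF lf] fgx lin_len[OF lg] unfolding x_def by simp
  ultimately have "int (d!i) dvd int E" using i by (auto simp: Dmod_def)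
  then show ?thesis unfolding E_def by simp
qed

end

lemma gcd_cong_mod:
  fixes d q k r :: nat
  assumes "d dvd r" "q mod r = k mod r"
  shows "gcd d q = gcd d k"
proof -
  have "gcd d q = gcd d (q mod d)" by (metis gcd.commute gcd_red_nat)
  also have "q mod d = (q mod r) mod d" using assms(1) by (simp add: mod_mod_cancel)
  also have "\<dots> = (k mod r) mod d" using assms(2) by simp
  also have "\<dots> = k mod d" using assms(1) by (simp add: mod_mod_cancel)
  also have "gcd d (k mod d) = gcd d k" by (metis gcd.commute gcd_red_nat)
  finally show ?thesis .
qed

lemma per_I:
  assumes lenA: "\<forall>a \<in> set A. length a = l" and I: "I \<subseteq> {..<length A}"
    and k: "k > 0" and q: "q > 0" and qk: "q mod rho l A = k mod rho l A"
  shows "int (card (CC l q (lat_span l A I))) = int (m_hom l A I k) * int q ^ (l - rank_S l A I)"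
proof -
  define L where "L = lat_span l A I"
  have sgL: "sg l L" unfolding L_def using sg_lat_span[OF lenA I] .
  obtain f g d where fg: "lauto l f g" and ld: "length d = l" and eL: "f ` L = Dmod l d"
    using diag[OF sgL] by blast
  interpret D: dsetup l L f g d using sgL fg ld eL by unfold_locales
  have tp: "tor_part l A I = D.S"
  proof -
    have "D.S = {x. length x = l \<and> (\<exists>n::nat. n > 0 \<and> smul (int n) x \<in> L)}" by (rule D.S_def)
    moreover have "tor_part l A I = {x. length x = l \<and> (\<exists>n::nat. n > 0 \<and> smul (int n) x \<in> L)}"
      unfolding tor_part_def L_def using pow_Zl by auto
    ultimately show ?thesis by simp
  qed
  have TG: "tor_group l A I = ((Zl l)\<lparr>carrier := D.S\<rparr>) Mod L"
    unfolding tor_group_def tp L_def by simp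
  have mh: "m_hom l A I k = (\<Prod>i<l. if d!i = 0 then 1 else gcd (d!i) k)"
    unfolding m_hom_def TG using D.card_hom_quot[OF k] .
  have rk: "rank_S l A I = card {i. i < l \<and> d!i \<noteq> 0}"
    using rank_Dmod[OF fg sgL ld eL] unfolding rk_def rank_S_def L_def .
  have Llen: "\<forall>b\<in>L. length b = l" using sg_len[OF sgL] by blast
  have cc: "card (CC l q L) = (\<Prod>i<l. gcd (d!i) q)"
    using card_CC_inv[OF fg Llen q] card_CC_Dmod[OF ld q] eL by simp
  have gg: "gcd (d!i) q = gcd (d!i) k" if i: "i < l" "d!i \<noteq> 0" for i
  proof -
    have "d!i dvd grp_exponent (tor_group l A I)" using D.dvd_expo[OF i] TG by simp
    also have "grp_exponent (tor_group l A I) dvd rho l A"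
      unfolding rho_def using I by (intro dvd_Lcm) blast
    finally show ?thesis using qk gcd_cong_mod by blast
  qed
  have "(\<Prod>i<l. gcd (d!i) q) = (\<Prod>i<l. (if d!i = 0 then 1 else gcd (d!i) k) * (if d!i = 0 then q else 1))"
    by (rule prod.cong) (auto simp: gg)
  also have "\<dots> = (\<Prod>i<l. if d!i = 0 then 1 else gcd (d!i) k) * (\<Prod>i<l. if d!i = 0 then q else 1)"
    by (rule prod.distrib)
  also have "(\<Prod>i<l. if d!i = 0 then q else 1) = q ^ card {i. i < l \<and> d!i = 0}"
  proof -
    have "(\<Prod>i<l. if d!i = 0 then q else 1) = (\<Prod>i\<in>{i. i < l \<and> d!i = 0}. q)"
      by (rule prod.mono_neutral_cong_right) auto
    then show ?thesis by simp
  qed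
  also have "card {i. i < l \<and> d!i = 0} = l - card {i. i < l \<and> d!i \<noteq> 0}"
  proof -
    have "{..<l} = {i. i < l \<and> d!i = 0} \<union> {i. i < l \<and> d!i \<noteq> 0}" by auto
    then have "l = card ({i. i < l \<and> d!i = 0} \<union> {i. i < l \<and> d!i \<noteq> 0})" by (metis card_lessThan)
    also have "\<dots> = card {i. i < l \<and> d!i = 0} + card {i. i < l \<and> d!i \<noteq> 0}"
      by (rule card_Un_disjoint) auto
    finally show ?thesis by simp
  qed
  finally have "card (CC l q L) = m_hom l A I k * q ^ (l - rank_S l A I)" using cc mh rk by simp
  then show ?thesis unfolding L_def by simp
qed



lemma card_ind: "finite U \<Longrightarrow> int (card {x\<in>U. Q x}) = (\<Sum>x\<in>U. if Q x then 1 else 0)"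
  by (simp add: sum.inter_filter[symmetric])

lemma prod_neg: "finite X \<Longrightarrow> (\<Prod>i\<in>X. - (a i :: int)) = (-1) ^ card X * (\<Prod>i\<in>X. a i)"
proof -
  assume "finite X"
  have "(\<Prod>i\<in>X. - a i) = (\<Prod>i\<in>X. (-1) * a i)" by simp
  also have "\<dots> = (\<Prod>i\<in>X. (-1::int)) * (\<Prod>i\<in>X. a i)" by (rule prod.distrib)
  finally show ?thesis by simp
qed

lemma IE:
  fixes U :: "'a set" and P :: "nat \<Rightarrow> 'a \<Rightarrow> bool"
  assumes U: "finite U"
  shows "int (card {x\<in>U. \<forall>i<n. \<not> P i x}) =
         (\<Sum>I\<in>Pow {..<n}. (-1) ^ card I * int (card {x\<in>U. \<forall>i\<in>I. P i x}))"
proof -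
  define a where "a i x = (if P i x then 1 else 0 :: int)" for i x
  have "int (card {x\<in>U. \<forall>i<n. \<not> P i x}) = (\<Sum>x\<in>U. if \<forall>i<n. \<not> P i x then 1 else 0)"
    using card_ind[OF U] .
  also have "\<dots> = (\<Sum>x\<in>U. \<Prod>i<n. (- a i x) + 1)"
  proof (rule sum.cong)
    fix x
    show "(if \<forall>i<n. \<not> P i x then 1 else 0) = (\<Prod>i<n. (- a i x) + 1)"
    proof (cases "\<forall>i<n. \<not> P i x")
      case True then show ?thesis by (simp add: a_def)
    next
      case False
      then obtain i where "i < n" "P i x" by auto
      then have z: "(\<Prod>i<n. (- a i x) + 1) = 0" by (intro prod_zero) (auto simp: a_def)
      have e: "(if \<forall>i<n. \<not> P i x then 1 else 0) = (0::int)" using False by simp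
      show ?thesis by (simp only: e z)
    qed
  qed simp
  also have "\<dots> = (\<Sum>x\<in>U. \<Sum>I\<in>Pow {..<n}. (\<Prod>i\<in>I. - a i x) * (\<Prod>i\<in>{..<n} - I. 1))"
    by (rule sum.cong[OF refl], rule prod_add) simp
  also have "\<dots> = (\<Sum>x\<in>U. \<Sum>I\<in>Pow {..<n}. (-1) ^ card I * (if \<forall>i\<in>I. P i x then 1 else 0))"
  proof (rule sum.cong[OF refl], rule sum.cong[OF refl])
    fix x I assume I: "I \<in> Pow {..<n}"
    then have fI: "finite I" by (auto intro: finite_subset)
    have "(\<Prod>i\<in>I. a i x) = (if \<forall>i\<in>I. P i x then 1 else 0)"
    proof (cases "\<forall>i\<in>I. P i x")
      case True then show ?thesis by (simp add: a_def)
    next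
      case False
      then obtain i where "i \<in> I" "\<not> P i x" by auto
      then have z: "(\<Prod>i\<in>I. a i x) = 0" using fI by (intro prod_zero) (auto simp: a_def)
      have e: "(if \<forall>i\<in>I. P i x then 1 else 0) = (0::int)" using False by simp
      show ?thesis by (simp only: e z)
    qed
    then show "(\<Prod>i\<in>I. - a i x) * (\<Prod>i\<in>{..<n} - I. 1) = (-1) ^ card I * (if \<forall>i\<in>I. P i x then 1 else 0)"
      using prod_neg[OF fI, of "\<lambda>i. a i x"] by simp
  qed
  also have "\<dots> = (\<Sum>I\<in>Pow {..<n}. \<Sum>x\<in>U. (-1) ^ card I * (if \<forall>i\<in>I. P i x then 1 else 0))"
    by (rule sum.swap)
  also have "\<dots> = (\<Sum>I\<in>Pow {..<n}. (-1) ^ card I * int (card {x\<in>U. \<forall>i\<in>I. P i x}))"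
    by (rule sum.cong[OF refl]) (simp add: sum_distrib_left[symmetric] card_ind[OF U])
  finally show ?thesis .
qed

theorem mainTheorem11:
  fixes l :: nat and A :: "int list list" and k :: nat
  assumes "\<forall>a \<in> set A. length a = l"
    and "k > 0" and "k dvd rho l A"
  shows "\<forall>q::nat. q > 0 \<and> q mod rho l A = k mod rho l A \<longrightarrow>
           int (M_card l A q) = chi l A k (int q)"
proof (intro allI impI)
  fix q :: nat
  assume qa: "q > 0 \<and> q mod rho l A = k mod rho l A"
  then have q: "q > 0" and qk: "q mod rho l A = k mod rho l A" by auto
  define n where "n = length A"
  define U where "U = {x::int list. length x = l \<and> set x \<subseteq> {0..<int q}}"
  define P where "P i x = (dot l (A!i) x mod int q = 0)" for i x
  have finU: "finite U"
  proof -
    have "U = {xs. set xs \<subseteq> {0..<int q} \<and> length xs = l}" by (auto simp: U_def)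
    then show ?thesis using finite_lists_length_eq[of "{0..<int q}" l] by simp
  qed
  have M: "M_card l A q = card {x\<in>U. \<forall>i<n. \<not> P i x}"
  proof -
    have "(\<forall>a \<in> set A. (\<Sum>i<l. a ! i * x ! i) mod int q \<noteq> 0) \<longleftrightarrow> (\<forall>i<n. \<not> P i x)" for x
      unfolding all_set_conv_all_nth P_def dot_def n_def by simp
    then show ?thesis unfolding M_card_def U_def by simp
  qed
  have CCI: "card {x\<in>U. \<forall>i\<in>I. P i x} = card (CC l q (lat_span l A I))" if I: "I \<subseteq> {..<n}" for I
  proof -
    have "{x\<in>U. \<forall>i\<in>I. P i x} = CC l q (lat_span l A I)"
      using lat_span_dot[OF assms(1) I[unfolded n_def]] by (auto simp: U_def CC_def P_def)
    then show ?thesis by simp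
  qed
  have "int (M_card l A q) = (\<Sum>I\<in>Pow {..<n}. (-1) ^ card I * int (card {x\<in>U. \<forall>i\<in>I. P i x}))"
    unfolding M using IE[OF finU] .
  also have "\<dots> = (\<Sum>I\<in>Pow {..<n}. (-1) ^ card I * int (m_hom l A I k) * int q ^ (l - rank_S l A I))"
  proof (rule sum.cong[OF refl])
    fix I assume "I \<in> Pow {..<n}"
    then have I: "I \<subseteq> {..<length A}" by (simp add: n_def)
    show "(-1) ^ card I * int (card {x\<in>U. \<forall>i\<in>I. P i x}) =
          (-1) ^ card I * int (m_hom l A I k) * int q ^ (l - rank_S l A I)"
      using CCI[OF I[folded n_def]] per_I[OF assms(1) I assms(2) q qk] by simp
  qed
  also have "\<dots> = chi l A k (int q)" unfolding chi_def n_def by simp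
  finally show "int (M_card l A q) = chi l A k (int q)" .
qed


end
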